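(* Let $d\ge2$, $n\ge1$ and let $H=(H_1,\dots,H_n):\mathbb{C}^n\to\mathbb{C}^n$ with $H_i(X)=\sum_{|\alpha|=d}\frac{H_{i,\alpha}}{\alpha!}X^\alpha$ for complex coefficients $H_{i,\alpha}$. Suppose the Jacobian matrix $JH$ satisfies $(JH)^p=0$ for some integer $1\le p\le n$. Then for every $k\ge1$, every $i\in[n]$, every $\alpha\in\mathbb{Z}^n_{\ge0}$ with $|\alpha|=(d-1)k+1$, and every length-$p$ shuffle class $\mathcal{S}$ in $\mathcal{C}_k^{(d)}$, $$\sum_{T\in\mathcal{S}}E_{i,\alpha,H}(T)=0.$$
   Context: A $d$-Catalan tree is a rooted planar tree in which each vertex has $0$ or $d$ children; $\mathcal{C}_k^{(d)}$ is the set of those with $k$ internal vertices (hence $(d-1)k+1$ leaves). For a path $(v_0,\dots,v_p)$ in $T$ ($v_i$ a child of $v_{i-1}$), the siblings of $v_1,\dots,v_p$ subtend $(d-1)p$ subtrees; the shuffle class $\mathrm{Sh}(T;v_0,\dots,v_p)\subseteq\mathcal{C}_k^{(d)}$ consists of all trees obtained from $T$ by rearranging these subtrees among the sibling positions, all else fixed; a length-$p$ shuffle class is any set of this form. A labelling of $T=(V,E)$ is a function $\tau:V\to[n]$; it is an $(i,\alpha)$ labelling if the root has type $i$ and exactly $\alpha_\ell$ leaves have type $\ell$ for each $\ell$. For an internal vertex $v$, $\mu(v)\in\mathbb{Z}^n_{\ge0}$ counts its children of each type. The $H$-weight of a labelling $\mathcal{T}=(T,\tau)$ is $\mathcal{E}_H(\mathcal{T})=\prod_{v\text{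 internal}}H_{\tau(v),\mu(v)}$, and $E_{i,\alpha,H}(T):=\sum_{(i,\alpha)\text{ labellings }\mathcal{T}\text{ of }T}\mathcal{E}_H(\mathcal{T})$. $(JH)_{i,j}=\partial H_i/\partial X_j$. *)

theory Defs
  imports "HOL-Analysis.Analysis"
begin

text \<open>A rooted planar tree is encoded by its set of vertex addresses: the root is [],
  and the c-th child (0-based) of vertex v is v @ [c].\<close>

definition dcatalan_tree :: "nat \<Rightarrow> nat list set \<Rightarrow> bool" where
  "dcatalan_tree d T \<longleftrightarrow> finite T \<and> [] \<in> T \<and>
     (\<forall>v c. v @ [c] \<in> T \<longrightarrow> v \<in> T) \<and>
     (\<forall>v\<in>T. (\<forall>c. v @ [c] \<notin> T) \<or> (\<forall>c. v @ [c] \<in> T \<longleftrightarrow> c < d))"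

definition internal_vertices :: "nat list set \<Rightarrow> nat list set" where
  "internal_vertices T = {v \<in> T. \<exists>c. v @ [c] \<in> T}"

definition leaves :: "nat list set \<Rightarrow> nat list set" where
  "leaves T = {v \<in> T. \<forall>c. v @ [c] \<notin> T}"

definition catalan_set :: "nat \<Rightarrow> nat \<Rightarrow> nat list set set" where
  "catalan_set d k = {T. dcatalan_tree d T \<and> card (internal_vertices T) = k}"

definition subtree_at :: "nat list set \<Rightarrow> nat list \<Rightarrow> nat list set" where
  "subtree_at T v = {w. v @ w \<in> T}"

text \<open>Path (v_0,...,v_p) given by v_0 and the child indices cs, v_i = v_0 @ take i cs.
  Sibling positions of v_1,...,v_p.\<close>
definition sibling_positions :: "nat \<Rightarrow> nat list \<Rightarrow> nat list \<Rightarrow> nat list set" where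
  "sibling_positions d v0 cs =
     {v0 @ take i cs @ [c] | i c. i < length cs \<and> c < d \<and> c \<noteq> cs ! i}"

text \<open>Shuffle class Sh(T; v_0,...,v_p): rearrange the subtrees at the sibling positions
  (sigma q is the original position whose subtree is moved to position q).\<close>
definition shuffle_class :: "nat \<Rightarrow> nat list set \<Rightarrow> nat list \<Rightarrow> nat list \<Rightarrow> nat list set set" where
  "shuffle_class d T v0 cs =
     (let P = sibling_positions d v0 cs in
      {T'. \<exists>\<sigma>. bij_betw \<sigma> P P \<and>
         T' = {w \<in> T. \<not> (\<exists>q\<in>P. (\<exists>u. w = q @ u))} \<union> (\<Union>q\<in>P. (\<lambda>w. q @ w) ` subtree_at T (\<sigma> q))})"

definition is_shuffle_class :: "nat \<Rightarrow> nat \<Rightarrow> nat \<Rightarrow> nat list set set \<Rightarrow> bool" where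
  "is_shuffle_class d k p S \<longleftrightarrow>
     (\<exists>T v0 cs. T \<in> catalan_set d k \<and> length cs = p \<and> v0 @ cs \<in> T \<and>
        S = shuffle_class d T v0 cs)"

definition child_type_count :: "nat list set \<Rightarrow> (nat list \<Rightarrow> 'n) \<Rightarrow> nat list \<Rightarrow> 'n \<Rightarrow> nat" where
  "child_type_count T \<tau> v = (\<lambda>j. card {c. v @ [c] \<in> T \<and> \<tau> (v @ [c]) = j})"

definition is_labelling :: "nat list set \<Rightarrow> 'n \<Rightarrow> ('n \<Rightarrow> nat) \<Rightarrow> (nat list \<Rightarrow> 'n) \<Rightarrow> bool" where
  "is_labelling T i \<alpha> \<tau> \<longleftrightarrow> \<tau> [] = i \<and> (\<forall>j. card {v \<in> leaves T. \<tau> v = j} = \<alpha> j)"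

definition E_weight :: "('n::finite \<Rightarrow> ('n \<Rightarrow> nat) \<Rightarrow> complex) \<Rightarrow> 'n \<Rightarrow> ('n \<Rightarrow> nat)
    \<Rightarrow> nat list set \<Rightarrow> complex" where
  "E_weight Hc i \<alpha> T =
     (\<Sum>\<tau> \<in> {\<tau> \<in> T \<rightarrow>\<^sub>E (UNIV :: 'n set). is_labelling T i \<alpha> \<tau>}.
        \<Prod>v \<in> internal_vertices T. Hc (\<tau> v) (child_type_count T \<tau> v))"

definition multi_indices :: "nat \<Rightarrow> ('n::finite \<Rightarrow> nat) set" where
  "multi_indices d = {\<alpha>. sum \<alpha> UNIV = d}"

definition Hmap :: "nat \<Rightarrow> ('n::finite \<Rightarrow> ('n \<Rightarrow> nat) \<Rightarrow> complex) \<Rightarrow> 'n \<Rightarrow> ('n \<Rightarrow> complex) \<Rightarrow> complex" where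
  "Hmap d Hc i x = (\<Sum>\<alpha> \<in> multi_indices d.
      Hc i \<alpha> / of_nat (\<Prod>j\<in>UNIV. fact (\<alpha> j)) * (\<Prod>j\<in>UNIV. x j ^ \<alpha> j))"

definition jacobian :: "nat \<Rightarrow> ('n::finite \<Rightarrow> ('n \<Rightarrow> nat) \<Rightarrow> complex) \<Rightarrow> ('n \<Rightarrow> complex) \<Rightarrow> complex^'n^'n" where
  "jacobian d Hc x = (\<chi> i j. deriv (\<lambda>t. Hmap d Hc i (x(j := t))) (x j))"

definition matpow :: "'a::comm_ring_1^'n^'n \<Rightarrow> nat \<Rightarrow> 'a^'n^'n" where
  "matpow A p = ((\<lambda>B. B ** A) ^^ p) (mat 1)"

end

theory Submission
  imports Defs "HOL-Computational_Algebra.Polynomial" "HOL-Combinatorics.Permutations"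
begin

definition xpow :: "('n::finite \<Rightarrow> complex) \<Rightarrow> ('n \<Rightarrow> nat) \<Rightarrow> complex" where
  "xpow x \<beta> = (\<Prod>j\<in>UNIV. x j ^ \<beta> j)"

definition mfact :: "('n::finite \<Rightarrow> nat) \<Rightarrow> nat" where
  "mfact \<beta> = (\<Prod>j\<in>UNIV. fact (\<beta> j))"

lemma finite_multi_indices: "finite (multi_indices d :: ('n::finite \<Rightarrow> nat) set)"
proof -
  have "multi_indices d \<subseteq> (UNIV::'n set) \<rightarrow>\<^sub>E {..d}"
  proof
    fix \<alpha> :: "'n \<Rightarrow> nat" assume "\<alpha> \<in> multi_indices d"
    hence s: "sum \<alpha> UNIV = d" by (simp add: multi_indices_def)
    have "\<alpha> j \<le> d" for j using member_le_sum[of j UNIV \<alpha>] s by auto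
    thus "\<alpha> \<in> UNIV \<rightarrow>\<^sub>E {..d}" by auto
  qed
  thus ?thesis by (rule finite_subset) (simp add: finite_PiE)
qed

lemma Hmap_upd:
  "Hmap d Hc a (x(b := t)) = (\<Sum>\<alpha>\<in>multi_indices d.
      (Hc a \<alpha> / of_nat (mfact \<alpha>) * (\<Prod>j\<in>UNIV-{b}. x j ^ \<alpha> j)) * t ^ \<alpha> b)"
  unfolding Hmap_def mfact_def
proof (rule sum.cong[OF refl])
  fix \<alpha> :: "'a \<Rightarrow> nat"
  have "(\<Prod>j\<in>UNIV. (x(b := t)) j ^ \<alpha> j) = (x(b:=t)) b ^ \<alpha> b * (\<Prod>j\<in>UNIV-{b}. (x(b := t)) j ^ \<alpha> j)"
    by (rule prod.remove) auto
  also have "(\<Prod>j\<in>UNIV-{b}. (x(b := t)) j ^ \<alpha> j) = (\<Prod>j\<in>UNIV-{b}. x j ^ \<alpha> j)"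
    by (rule prod.cong) auto
  finally show "Hc a \<alpha> / of_nat (\<Prod>j\<in>UNIV. fact (\<alpha> j)) * (\<Prod>j\<in>UNIV. (x(b := t)) j ^ \<alpha> j) =
         Hc a \<alpha> / of_nat (\<Prod>j\<in>UNIV. fact (\<alpha> j)) * (\<Prod>j\<in>UNIV - {b}. x j ^ \<alpha> j) * t ^ \<alpha> b"
    by simp
qed

lemma jacobian_raw:
  "jacobian d Hc x $ a $ b = (\<Sum>\<alpha>\<in>multi_indices d.
      (Hc a \<alpha> / of_nat (mfact \<alpha>) * (\<Prod>j\<in>UNIV-{b}. x j ^ \<alpha> j)) * (of_nat (\<alpha> b) * x b ^ (\<alpha> b - 1)))"
proof -
  have dpow: "((\<lambda>t. t ^ m) has_field_derivative of_nat m * y^(m-1)) (at y)" for m and y :: complex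
    using DERIV_power[OF DERIV_ident, of m y] by simp
  have "((\<lambda>t. Hmap d Hc a (x(b := t))) has_field_derivative (\<Sum>\<alpha>\<in>multi_indices d.
      (Hc a \<alpha> / of_nat (mfact \<alpha>) * (\<Prod>j\<in>UNIV-{b}. x j ^ \<alpha> j)) * (of_nat (\<alpha> b) * x b ^ (\<alpha> b - 1)))) (at (x b))"
    unfolding Hmap_upd
    by (intro DERIV_sum DERIV_cmult) (rule dpow)
  hence "deriv (\<lambda>t. Hmap d Hc a (x(b := t))) (x b) = (\<Sum>\<alpha>\<in>multi_indices d.
      (Hc a \<alpha> / of_nat (mfact \<alpha>) * (\<Prod>j\<in>UNIV-{b}. x j ^ \<alpha> j)) * (of_nat (\<alpha> b) * x b ^ (\<alpha> b - 1)))" by (rule DERIV_imp_deriv)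
  thus ?thesis unfolding jacobian_def by simp
qed

lemma prod_rem: "(\<Prod>j\<in>(UNIV::'n::finite set). f j) = f b * (\<Prod>j\<in>UNIV-{b}. f j)"
  by (rule prod.remove) auto

lemma sum_rem: "(\<Sum>j\<in>(UNIV::'n::finite set). f j) = f b + (\<Sum>j\<in>UNIV-{b}. f j)"
  by (rule sum.remove) auto

lemma sum_upd_Suc: "sum (\<beta>(b := Suc (\<beta> b))) (UNIV::'n::finite set) = Suc (sum \<beta> UNIV)"
proof -
  have "sum (\<beta>(b := Suc (\<beta> b))) (UNIV::'n set) = Suc (\<beta> b) + (\<Sum>j\<in>UNIV-{b}. (\<beta>(b := Suc (\<beta> b))) j)"
    using sum_rem[of "\<beta>(b := Suc (\<beta> b))" b] by simp
  also have "(\<Sum>j\<in>UNIV-{b}. (\<beta>(b := Suc (\<beta> b))) j) = (\<Sum>j\<in>UNIV-{b}. \<beta> j)"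
    by (rule sum.cong) auto
  also have "sum \<beta> UNIV = \<beta> b + (\<Sum>j\<in>UNIV-{b}. \<beta> j)" by (rule sum_rem)
  ultimately show ?thesis by simp
qed

lemma mfact_upd_Suc: "mfact (\<beta>(b := Suc (\<beta> b))) = Suc (\<beta> b) * mfact (\<beta> :: 'n::finite \<Rightarrow> nat)"
proof -
  have "mfact (\<beta>(b := Suc (\<beta> b))) = fact (Suc (\<beta> b)) * (\<Prod>j\<in>UNIV-{b}. fact ((\<beta>(b := Suc (\<beta> b))) j))"
    unfolding mfact_def using prod_rem[of "\<lambda>j. fact ((\<beta>(b := Suc (\<beta> b))) j)" b] by (simp only: fun_upd_same)
  also have "(\<Prod>j\<in>UNIV-{b}. fact ((\<beta>(b := Suc (\<beta> b))) j)) = (\<Prod>j\<in>UNIV-{b}. fact (\<beta> j) :: nat)"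
    by (rule prod.cong) auto
  finally have A: "mfact (\<beta>(b := Suc (\<beta> b))) = fact (Suc (\<beta> b)) * (\<Prod>j\<in>UNIV-{b}. fact (\<beta> j) :: nat)" .
  have B: "mfact \<beta> = fact (\<beta> b) * (\<Prod>j\<in>UNIV-{b}. fact (\<beta> j))" unfolding mfact_def by (rule prod_rem)
  show ?thesis unfolding A B fact_Suc by (simp add: algebra_simps)
qed

lemma xpow_split: "xpow x \<beta> = x b ^ \<beta> b * (\<Prod>j\<in>UNIV-{b}. x j ^ \<beta> j)"
  unfolding xpow_def by (rule prod_rem)

lemma mfact_pos: "mfact \<beta> > 0"
  unfolding mfact_def by (simp add: prod_pos)

lemma jacobian_formula:
  assumes "d \<ge> 1"
  shows "jacobian d Hc x $ a $ b = (\<Sum>\<beta>\<in>multi_indices (d-1).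
      Hc a (\<beta>(b := Suc (\<beta> b))) / of_nat (mfact \<beta>) * xpow x \<beta>)"
proof -
  let ?f = "\<lambda>\<alpha>. (Hc a \<alpha> / of_nat (mfact \<alpha>) * (\<Prod>j\<in>UNIV-{b}. x j ^ \<alpha> j)) * (of_nat (\<alpha> b) * x b ^ (\<alpha> b - 1))"
  let ?up = "\<lambda>\<beta>::'a \<Rightarrow> nat. \<beta>(b := Suc (\<beta> b))"
  have sub: "?up ` multi_indices (d-1) \<subseteq> multi_indices d"
  proof (rule image_subsetI)
    fix \<beta> :: "'a \<Rightarrow> nat" assume "\<beta> \<in> multi_indices (d-1)"
    thus "?up \<beta> \<in> multi_indices d" using assms unfolding multi_indices_def
      by (simp only: mem_Collect_eq sum_upd_Suc)
  qed
  have "jacobian d Hc x $ a $ b = sum ?f (multi_indices d)" by (rule jacobian_raw)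
  also have "\<dots> = sum ?f (?up ` multi_indices (d-1))"
  proof (rule sum.mono_neutral_right[OF finite_multi_indices sub])
    show "\<forall>\<alpha>\<in>multi_indices d - ?up ` multi_indices (d-1). ?f \<alpha> = 0"
    proof
      fix \<alpha> assume a: "\<alpha> \<in> multi_indices d - ?up ` multi_indices (d-1)"
      show "?f \<alpha> = 0"
      proof (cases "\<alpha> b")
        case (Suc m)
        let ?\<beta> = "\<alpha>(b := m)"
        have upb: "?up ?\<beta> = \<alpha>" using Suc by auto
        have "Suc (sum ?\<beta> UNIV) = d"
        proof -
          have e: "sum (?up ?\<beta>) UNIV = Suc (sum ?\<beta> UNIV)" by (rule sum_upd_Suc)
          have "sum \<alpha> UNIV = d" using a by (simp add: multi_indices_def)
          thus ?thesis using e[unfolded \<open>?up ?\<beta> = \<alpha>\<close>] by simp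
        qed
        hence bm: "?\<beta> \<in> multi_indices (d-1)" by (auto simp: multi_indices_def)
        have "?up ?\<beta> \<in> ?up ` multi_indices (d-1)" by (rule imageI[OF bm])
        hence "\<alpha> \<in> ?up ` multi_indices (d-1)" unfolding upb .
        thus ?thesis using a by blast
      qed simp
    qed
  qed
  also have "\<dots> = sum (?f \<circ> ?up) (multi_indices (d-1))"
    by (rule sum.reindex) (auto simp: inj_on_def fun_eq_iff split: if_splits)
  also have "\<dots> = (\<Sum>\<beta>\<in>multi_indices (d-1). Hc a (?up \<beta>) / of_nat (mfact \<beta>) * xpow x \<beta>)"
  proof (rule sum.cong[OF refl])
    fix \<beta> :: "'a \<Rightarrow> nat"
    have p: "(\<Prod>j\<in>UNIV-{b}. x j ^ (?up \<beta>) j) = (\<Prod>j\<in>UNIV-{b}. x j ^ \<beta> j)"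
      by (rule prod.cong) auto
    have m: "of_nat (mfact (?up \<beta>)) = (of_nat (Suc (\<beta> b)) :: complex) * of_nat (mfact \<beta>)"
      by (simp only: mfact_upd_Suc of_nat_mult)
    have nz: "(of_nat (mfact \<beta>) :: complex) \<noteq> 0" using mfact_pos[of \<beta>] by simp
    have nz2: "(of_nat (Suc (\<beta> b)) :: complex) \<noteq> 0" by (metis of_nat_eq_0_iff nat.distinct(1))
    show "(?f \<circ> ?up) \<beta> = Hc a (?up \<beta>) / of_nat (mfact \<beta>) * xpow x \<beta>"
    proof -
      have gen: "\<And>H P X c M. (c::complex) \<noteq> 0 \<Longrightarrow> M \<noteq> 0 \<Longrightarrow> H / (c*M) * P * (c*X) = H/M * (X*P)"
        by (simp add: field_simps)
      have e1: "(?up \<beta>) b = Suc (\<beta> b)" by simp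
      have e2: "(of_nat (Suc (\<beta> b)) :: complex) * x b ^ (Suc (\<beta> b) - 1) = of_nat (Suc (\<beta> b)) * x b ^ \<beta> b" by simp
      show ?thesis
        unfolding comp_def p m xpow_split[of x \<beta> b] e1 e2
        by (rule gen[OF nz2 nz])
    qed
  qed
  finally show ?thesis .
qed

definition cnt :: "'a set \<Rightarrow> ('a \<Rightarrow> 'n) \<Rightarrow> 'n \<Rightarrow> nat" where
  "cnt C h = (\<lambda>j. card {c\<in>C. h c = j})"

lemma sum_PiE_insert:
  assumes "x \<notin> S" "finite S" "\<And>y. finite (T y)"
  shows "(\<Sum>h\<in>PiE (insert x S) T. F h) = (\<Sum>y\<in>T x. \<Sum>g\<in>PiE S T. F (g(x := y)))"
proof -
  have "(\<Sum>h\<in>PiE (insert x S) T. F h) = (\<Sum>h\<in>(\<lambda>(y, g). g(x := y)) ` (T x \<times> Pi\<^sub>E S T). F h)"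
    by (simp add: PiE_insert_eq)
  also have "\<dots> = (\<Sum>(y,g)\<in>T x \<times> Pi\<^sub>E S T. F (g(x := y)))"
    by (subst sum.reindex[OF inj_combinator[OF assms(1)]]) (simp add: case_prod_unfold)
  also have "\<dots> = (\<Sum>y\<in>T x. \<Sum>g\<in>PiE S T. F (g(x := y)))"
    by (subst sum.cartesian_product) auto
  finally show ?thesis .
qed

lemma reindex_up:
  "(\<Sum>\<beta>\<in>multi_indices m. f (\<beta>(j := Suc (\<beta> j)))) =
   (\<Sum>\<alpha>\<in>multi_indices (Suc m). if \<alpha> j = 0 then 0 else f (\<alpha>::'n::finite \<Rightarrow> nat))"
proof -
  let ?up = "\<lambda>\<beta>::'n \<Rightarrow> nat. \<beta>(j := Suc (\<beta> j))"
  let ?g = "\<lambda>\<alpha>. if \<alpha> j = 0 then 0 else f \<alpha>"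
  have sub: "?up ` multi_indices m \<subseteq> multi_indices (Suc m)"
  proof (rule image_subsetI)
    fix \<beta> :: "'n \<Rightarrow> nat" assume "\<beta> \<in> multi_indices m"
    thus "?up \<beta> \<in> multi_indices (Suc m)" unfolding multi_indices_def
      by (simp only: mem_Collect_eq sum_upd_Suc)
  qed
  have "sum ?g (multi_indices (Suc m)) = sum ?g (?up ` multi_indices m)"
  proof (rule sum.mono_neutral_right[OF finite_multi_indices sub])
    show "\<forall>\<alpha>\<in>multi_indices (Suc m) - ?up ` multi_indices m. ?g \<alpha> = 0"
    proof
      fix \<alpha> assume a: "\<alpha> \<in> multi_indices (Suc m) - ?up ` multi_indices m"
      show "?g \<alpha> = 0"
      proof (cases "\<alpha> j")
        case (Suc k)
        let ?\<beta> = "\<alpha>(j := k)"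
        have upb: "?up ?\<beta> = \<alpha>" using Suc by auto
        have "Suc (sum ?\<beta> UNIV) = Suc m"
        proof -
          have e: "sum (?up ?\<beta>) UNIV = Suc (sum ?\<beta> UNIV)" by (rule sum_upd_Suc)
          have "sum \<alpha> UNIV = Suc m" using a by (simp add: multi_indices_def)
          thus ?thesis using e[unfolded upb] by simp
        qed
        hence bm: "?\<beta> \<in> multi_indices m" by (auto simp: multi_indices_def)
        have "?up ?\<beta> \<in> ?up ` multi_indices m" by (rule imageI[OF bm])
        hence "\<alpha> \<in> ?up ` multi_indices m" unfolding upb .
        thus ?thesis using a by blast
      qed simp
    qed
  qed
  also have "\<dots> = sum (?g \<circ> ?up) (multi_indices m)"
    by (rule sum.reindex) (auto simp: inj_on_def fun_eq_iff split: if_splits)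
  also have "\<dots> = (\<Sum>\<beta>\<in>multi_indices m. f (?up \<beta>))"
    by (rule sum.cong) auto
  finally show ?thesis by simp
qed

lemma xpow_up: "xpow x (\<beta>(j := Suc (\<beta> j))) = x j * xpow x \<beta>"
proof -
  have "xpow x (\<beta>(j := Suc (\<beta> j))) = x j ^ Suc (\<beta> j) * (\<Prod>i\<in>UNIV-{j}. x i ^ (\<beta>(j := Suc (\<beta> j))) i)"
    using xpow_split[of x "\<beta>(j := Suc (\<beta> j))" j] by (simp only: fun_upd_same)
  also have "(\<Prod>i\<in>UNIV-{j}. x i ^ (\<beta>(j := Suc (\<beta> j))) i) = (\<Prod>i\<in>UNIV-{j}. x i ^ \<beta> i)"
    by (rule prod.cong) auto
  finally have A: "xpow x (\<beta>(j := Suc (\<beta> j))) = x j ^ Suc (\<beta> j) * (\<Prod>i\<in>UNIV-{j}. x i ^ \<beta> i)" .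
  show ?thesis unfolding A xpow_split[of x \<beta> j] by simp
qed

lemma cnt_upd:
  assumes "c \<notin> C" "finite C"
  shows "cnt (insert c C) (g(c := j)) = (cnt C g)(j := Suc (cnt C g j))"
proof
  fix i
  have "{c'\<in>insert c C. (g(c := j)) c' = i} = (if j = i then insert c {c'\<in>C. g c' = i} else {c'\<in>C. g c' = i})"
    using assms(1) by auto
  thus "cnt (insert c C) (g(c := j)) i = ((cnt C g)(j := Suc (cnt C g j))) i"
    unfolding cnt_def using assms by auto
qed

lemma multi_indices_0: "multi_indices 0 = {(\<lambda>_. 0) :: 'n::finite \<Rightarrow> nat}"
  unfolding multi_indices_def by (auto simp: fun_eq_iff)

lemma K_lemma:
  fixes x :: "'n::finite \<Rightarrow> complex"
  assumes "finite C"
  shows "(\<Sum>h\<in>C \<rightarrow>\<^sub>E (UNIV::'n set). G (cnt C h) * (\<Prod>c\<in>C. x (h c))) =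
         of_nat (fact (card C)) * (\<Sum>\<beta>\<in>multi_indices (card C). G \<beta> / of_nat (mfact \<beta>) * xpow x \<beta>)"
  using assms
proof (induction C arbitrary: G rule: finite_induct)
  case empty
  have c: "cnt {} h = (\<lambda>_. 0)" for h :: "'a \<Rightarrow> 'n" by (simp add: cnt_def)
  show ?case by (simp add: multi_indices_0 c mfact_def xpow_def)
next
  case (insert c C)
  let ?up = "\<lambda>j (\<beta>::'n \<Rightarrow> nat). \<beta>(j := Suc (\<beta> j))"
  let ?F = "\<lambda>\<alpha>. G \<alpha> / of_nat (mfact \<alpha>) * xpow x \<alpha>"
  have "(\<Sum>h\<in>insert c C \<rightarrow>\<^sub>E (UNIV::'n set). G (cnt (insert c C) h) * (\<Prod>c\<in>insert c C. x (h c))) =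
        (\<Sum>j\<in>UNIV. \<Sum>g\<in>C \<rightarrow>\<^sub>E (UNIV::'n set). G (cnt (insert c C) (g(c:=j))) * (\<Prod>c'\<in>insert c C. x ((g(c:=j)) c')))"
    by (rule sum_PiE_insert) (use insert in auto)
  also have "\<dots> = (\<Sum>j\<in>UNIV. x j * (\<Sum>g\<in>C \<rightarrow>\<^sub>E (UNIV::'n set). G (?up j (cnt C g)) * (\<Prod>c'\<in>C. x (g c'))))"
  proof (rule sum.cong[OF refl])
    fix j
    have pe: "(\<Prod>c'\<in>insert c C. x ((g(c:=j)) c')) = x j * (\<Prod>c'\<in>C. x (g c'))" for g
    proof -
      have "(\<Prod>c'\<in>insert c C. x ((g(c:=j)) c')) = x ((g(c:=j)) c) * (\<Prod>c'\<in>C. x ((g(c:=j)) c'))"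
        by (rule prod.insert[OF insert.hyps(1) insert.hyps(2)])
      also have "(\<Prod>c'\<in>C. x ((g(c:=j)) c')) = (\<Prod>c'\<in>C. x (g c'))"
        using insert by (intro prod.cong) auto
      finally show ?thesis by simp
    qed
    have "(\<Sum>g\<in>C \<rightarrow>\<^sub>E UNIV. G (cnt (insert c C) (g(c:=j))) * (\<Prod>c'\<in>insert c C. x ((g(c:=j)) c'))) =
          (\<Sum>g\<in>C \<rightarrow>\<^sub>E UNIV. x j * (G (?up j (cnt C g)) * (\<Prod>c'\<in>C. x (g c'))))"
      by (rule sum.cong[OF refl]) (simp only: cnt_upd[OF insert.hyps(2,1)] pe mult_ac)
    thus "(\<Sum>g\<in>C \<rightarrow>\<^sub>E UNIV. G (cnt (insert c C) (g(c:=j))) * (\<Prod>c'\<in>insert c C. x ((g(c:=j)) c'))) =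
          x j * (\<Sum>g\<in>C \<rightarrow>\<^sub>E UNIV. G (?up j (cnt C g)) * (\<Prod>c'\<in>C. x (g c')))"
      by (simp only: sum_distrib_left)
  qed
  also have "\<dots> = (\<Sum>j\<in>UNIV. x j * (of_nat (fact (card C)) * (\<Sum>\<beta>\<in>multi_indices (card C). G (?up j \<beta>) / of_nat (mfact \<beta>) * xpow x \<beta>)))"
    by (subst insert.IH) simp_all
  also have "\<dots> = (\<Sum>j\<in>UNIV. of_nat (fact (card C)) * (\<Sum>\<beta>\<in>multi_indices (card C). (\<lambda>\<alpha>. ?F \<alpha> * of_nat (\<alpha> j)) (?up j \<beta>)))"
  proof (rule sum.cong[OF refl])
    fix j
    have "x j * (G (?up j \<beta>) / of_nat (mfact \<beta>) * xpow x \<beta>) = (\<lambda>\<alpha>. ?F \<alpha> * of_nat (\<alpha> j)) (?up j \<beta>)" for \<beta>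
    proof -
      have nz: "(of_nat (mfact \<beta>) :: complex) \<noteq> 0" using mfact_pos[of \<beta>] by simp
      have nz2: "(of_nat (Suc (\<beta> j)) :: complex) \<noteq> 0" by (metis of_nat_eq_0_iff nat.distinct(1))
      have m: "of_nat (mfact (?up j \<beta>)) = (of_nat (Suc (\<beta> j)) :: complex) * of_nat (mfact \<beta>)"
        by (simp only: mfact_upd_Suc of_nat_mult)
      have gen: "\<And>H P X c M. (c::complex) \<noteq> 0 \<Longrightarrow> M \<noteq> 0 \<Longrightarrow> X * (H / M * P) = H / (c * M) * (X * P) * c"
        by (simp add: field_simps)
      show ?thesis unfolding m xpow_up fun_upd_same by (rule gen[OF nz2 nz])
    qed
    note pw = this
    have "x j * (of_nat (fact (card C)) * (\<Sum>\<beta>\<in>multi_indices (card C). G (?up j \<beta>) / of_nat (mfact \<beta>) * xpow x \<beta>)) =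
          of_nat (fact (card C)) * (\<Sum>\<beta>\<in>multi_indices (card C). x j * (G (?up j \<beta>) / of_nat (mfact \<beta>) * xpow x \<beta>))"
      by (simp only: sum_distrib_left mult.left_commute)
    also have "(\<Sum>\<beta>\<in>multi_indices (card C). x j * (G (?up j \<beta>) / of_nat (mfact \<beta>) * xpow x \<beta>)) =
       (\<Sum>\<beta>\<in>multi_indices (card C). (\<lambda>\<alpha>. ?F \<alpha> * of_nat (\<alpha> j)) (?up j \<beta>))"
      by (rule sum.cong[OF refl]) (rule pw)
    finally show "x j * (of_nat (fact (card C)) * (\<Sum>\<beta>\<in>multi_indices (card C). G (?up j \<beta>) / of_nat (mfact \<beta>) * xpow x \<beta>)) =
          of_nat (fact (card C)) * (\<Sum>\<beta>\<in>multi_indices (card C). (\<lambda>\<alpha>. ?F \<alpha> * of_nat (\<alpha> j)) (?up j \<beta>))"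
      .
  qed
  also have "\<dots> = (\<Sum>j\<in>UNIV. of_nat (fact (card C)) * (\<Sum>\<alpha>\<in>multi_indices (Suc (card C)). ?F \<alpha> * of_nat (\<alpha> j)))"
    by (subst reindex_up) (rule sum.cong[OF refl], rule arg_cong[where f="\<lambda>z. _ * z"], rule sum.cong[OF refl], simp)
  also have "\<dots> = of_nat (fact (card C)) * (\<Sum>\<alpha>\<in>multi_indices (Suc (card C)). ?F \<alpha> * of_nat (\<Sum>j\<in>UNIV. \<alpha> j))"
  proof -
    have "(\<Sum>j\<in>UNIV. of_nat (fact (card C)) * (\<Sum>\<alpha>\<in>multi_indices (Suc (card C)). ?F \<alpha> * of_nat (\<alpha> j))) =
       of_nat (fact (card C)) * (\<Sum>j\<in>UNIV. \<Sum>\<alpha>\<in>multi_indices (Suc (card C)). ?F \<alpha> * of_nat (\<alpha> j))"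
      by (simp only: sum_distrib_left)
    also have "(\<Sum>j\<in>UNIV. \<Sum>\<alpha>\<in>multi_indices (Suc (card C)). ?F \<alpha> * of_nat (\<alpha> j)) =
       (\<Sum>\<alpha>\<in>multi_indices (Suc (card C)). \<Sum>j\<in>UNIV. ?F \<alpha> * of_nat (\<alpha> j))"
      by (rule sum.swap)
    also have "\<dots> = (\<Sum>\<alpha>\<in>multi_indices (Suc (card C)). ?F \<alpha> * of_nat (\<Sum>j\<in>UNIV. \<alpha> j))"
      by (simp only: of_nat_sum sum_distrib_left)
    finally show ?thesis .
  qed
  also have "\<dots> = of_nat (fact (card C)) * (\<Sum>\<alpha>\<in>multi_indices (Suc (card C)). ?F \<alpha> * of_nat (Suc (card C)))"
    by (rule arg_cong[where f="\<lambda>z. _ * z"], rule sum.cong) (auto simp: multi_indices_def)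
  also have "\<dots> = of_nat (fact (card (insert c C))) * (\<Sum>\<alpha>\<in>multi_indices (card (insert c C)). ?F \<alpha>)"
  proof -
    have cc: "card (insert c C) = Suc (card C)" using insert by simp
    have "(\<Sum>\<alpha>\<in>multi_indices (Suc (card C)). ?F \<alpha> * of_nat (Suc (card C))) = (\<Sum>\<alpha>\<in>multi_indices (Suc (card C)). ?F \<alpha>) * of_nat (Suc (card C))"
      by (rule sum_distrib_right[symmetric])
    thus ?thesis unfolding cc fact_Suc of_nat_mult of_nat_id by (simp only: mult_ac)
  qed
  finally show ?case .
qed

lemma vertex_lemma:
  fixes x :: "'n::finite \<Rightarrow> complex"
  assumes "d \<ge> 1" "finite C" "card C = d - 1"
  shows "(\<Sum>h\<in>C \<rightarrow>\<^sub>E (UNIV::'n set). Hc a ((cnt C h)(b := Suc (cnt C h b))) * (\<Prod>c\<in>C. x (h c))) =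
         of_nat (fact (d-1)) * jacobian d Hc x $ a $ b"
  using K_lemma[OF assms(2), of "\<lambda>\<beta>. Hc a (\<beta>(b := Suc (\<beta> b)))" x] jacobian_formula[OF assms(1), of Hc x a b] assms(3)
  by simp

definition paths :: "nat \<Rightarrow> 'n \<Rightarrow> 'n \<Rightarrow> (nat \<Rightarrow> 'n) set" where
  "paths p a b = {t \<in> {..p} \<rightarrow>\<^sub>E UNIV. t 0 = a \<and> t p = b}"

lemma finite_paths: "finite (paths p a (b::'n::finite))"
  unfolding paths_def by (rule finite_subset[of _ "{..p} \<rightarrow>\<^sub>E UNIV"]) (auto intro: finite_PiE)

lemma matpow_Suc: "matpow A (Suc p) = matpow A p ** A"
  unfolding matpow_def by simp

lemma matpow_paths:
  fixes A :: "'a::comm_ring_1^'n::finite^'n"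
  shows "matpow A p $ a $ b = (\<Sum>t\<in>paths p a b. \<Prod>i<p. A $ t i $ t (Suc i))"
proof (induction p arbitrary: b)
  case 0
  show ?case
  proof (cases "a = b")
    case True
    have "paths 0 a b = {(\<lambda>i. if i = 0 then a else undefined)}"
      using True by (auto simp: paths_def PiE_def extensional_def fun_eq_iff)
    thus ?thesis using True by (simp add: matpow_def mat_def)
  next
    case False
    have "paths 0 a b = {}" using False by (auto simp: paths_def)
    thus ?thesis using False by (simp add: matpow_def mat_def)
  qed
next
  case (Suc p)
  have "matpow A (Suc p) $ a $ b = (\<Sum>c\<in>UNIV. matpow A p $ a $ c * A $ c $ b)"
    by (simp add: matpow_Suc matrix_matrix_mult_def)
  also have "\<dots> = (\<Sum>c\<in>UNIV. \<Sum>t\<in>paths p a c. (\<Prod>i<p. A $ t i $ t (Suc i)) * A $ c $ b)"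
    by (simp add: Suc.IH sum_distrib_right)
  also have "\<dots> = (\<Sum>(c,t)\<in>Sigma UNIV (\<lambda>c. paths p a c). (\<Prod>i<p. A $ t i $ t (Suc i)) * A $ c $ b)"
    by (rule sum.Sigma) (auto simp: finite_paths)
  also have "\<dots> = (\<Sum>t\<in>paths (Suc p) a b. \<Prod>i<Suc p. A $ t i $ t (Suc i))"
  proof (rule sum.reindex_bij_witness[of _ "\<lambda>t. (t p, restrict t {..p})" "\<lambda>(c,t). t(Suc p := b)"])
    fix ct assume "ct \<in> Sigma UNIV (\<lambda>c. paths p a c)"
    then obtain c t where ct: "ct = (c,t)" "t \<in> paths p a c" by auto
    hence t: "t \<in> {..p} \<rightarrow>\<^sub>E UNIV" "t 0 = a" "t p = c" by (auto simp: paths_def)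
    show "(\<lambda>t. (t p, restrict t {..p})) (case ct of (c, t) \<Rightarrow> t(Suc p := b)) = ct"
      using ct t by (auto simp: fun_eq_iff PiE_def extensional_def restrict_def)
    show "(case ct of (c, t) \<Rightarrow> t(Suc p := b)) \<in> paths (Suc p) a b"
      using ct t by (auto simp: paths_def PiE_def extensional_def)
    have pr: "(\<Prod>i<p. A $ (t(Suc p := b)) i $ (t(Suc p := b)) (Suc i)) = (\<Prod>i<p. A $ t i $ t (Suc i))"
      by (rule prod.cong) auto
    show "(\<Prod>i<Suc p. A $ (case ct of (c, t) \<Rightarrow> t(Suc p := b)) i $ (case ct of (c, t) \<Rightarrow> t(Suc p := b)) (Suc i)) =
          (case ct of (c, t) \<Rightarrow> (\<Prod>i<p. A $ t i $ t (Suc i)) * A $ c $ b)"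
      using ct t pr by simp
  next
    fix t assume "t \<in> paths (Suc p) a b"
    hence t: "t \<in> {..Suc p} \<rightarrow>\<^sub>E UNIV" "t 0 = a" "t (Suc p) = b" by (auto simp: paths_def)
    show "(\<lambda>t. (t p, restrict t {..p})) t \<in> Sigma UNIV (\<lambda>c. paths p a c)"
      using t by (auto simp: paths_def)
    show "(case (\<lambda>t. (t p, restrict t {..p})) t of (c, t) \<Rightarrow> t(Suc p := b)) = t"
      using t by (auto simp: fun_eq_iff PiE_def extensional_def restrict_def)
  qed
  finally show ?case .
qed

lemma univariate_zero:
  assumes "finite M" "\<And>t::complex. (\<Sum>m\<in>M. t ^ m * a m) = 0" "m \<in> M"
  shows "a m = 0"
proof -
  define P where "P = (\<Sum>m'\<in>M. monom (a m') m')"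
  have "poly P t = 0" for t
    unfolding P_def poly_sum poly_monom using assms(2)[of t] by (simp add: mult_ac)
  hence "P = 0" using poly_all_0_iff_0 by blast
  hence "coeff P m = 0" by simp
  moreover have "coeff P m = a m"
    unfolding P_def coeff_sum coeff_monom using assms(1,3) by (simp add: sum.delta)
  ultimately show ?thesis by simp
qed

lemma xpow_zero_outside: "xpow x (\<beta>(v := 0)) = (\<Prod>j\<in>UNIV-{v}. x j ^ \<beta> j)"
proof -
  have "xpow x (\<beta>(v := 0)) = x v ^ 0 * (\<Prod>j\<in>UNIV-{v}. x j ^ (\<beta>(v := 0)) j)"
    using xpow_split[of x "\<beta>(v:=0)" v] by (simp only: fun_upd_same)
  also have "(\<Prod>j\<in>UNIV-{v}. x j ^ (\<beta>(v := 0)) j) = (\<Prod>j\<in>UNIV-{v}. x j ^ \<beta> j)"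
    by (rule prod.cong) auto
  finally show ?thesis by (simp only: power_0 mult_1)
qed

lemma multivariate_zero_aux:
  fixes V :: "'n::finite set"
  assumes "finite V"
  shows "\<forall>G c. finite G \<longrightarrow> (\<forall>\<beta>\<in>G. \<forall>j. j \<notin> V \<longrightarrow> \<beta> j = 0) \<longrightarrow>
           (\<forall>x. (\<Sum>\<beta>\<in>G. c \<beta> * xpow x \<beta>) = (0::complex)) \<longrightarrow> (\<forall>\<beta>\<in>G. c \<beta> = 0)"
  using assms
proof (induction V rule: finite_induct)
  case empty
  show ?case
  proof (intro allI impI ballI)
    fix G c \<beta> assume fG: "finite (G :: ('n \<Rightarrow> nat) set)" and z: "\<forall>\<beta>\<in>G. \<forall>j. j \<notin> {} \<longrightarrow> \<beta> j = 0"
      and s: "\<forall>x. (\<Sum>\<beta>\<in>G. c \<beta> * xpow x \<beta>) = (0::complex)" and b: "\<beta> \<in> G"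
    have hb: "\<beta> = (\<lambda>_. 0)" using z b by (auto simp: fun_eq_iff)
    have "G = {\<lambda>_. 0}"
    proof
      show "G \<subseteq> {\<lambda>_. 0}" using z by (auto simp: fun_eq_iff)
      show "{\<lambda>_. 0} \<subseteq> G" using b hb by auto
    qed
    hence "\<beta> = (\<lambda>_. 0)" using b by auto
    moreover have "c (\<lambda>_. 0) = 0" using s \<open>G = _\<close> by (simp add: xpow_def)
    ultimately show "c \<beta> = 0" by simp
  qed
next
  case (insert v V)
  show ?case
  proof (intro allI impI ballI)
    fix G c \<beta> assume fG: "finite (G :: ('n \<Rightarrow> nat) set)" and z: "\<forall>\<beta>\<in>G. \<forall>j. j \<notin> insert v V \<longrightarrow> \<beta> j = 0"
      and s: "\<forall>x. (\<Sum>\<beta>\<in>G. c \<beta> * xpow x \<beta>) = (0::complex)" and b: "\<beta> \<in> G"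
    let ?m = "\<beta> v"
    let ?Gm = "\<lambda>m. {\<beta>\<in>G. \<beta> v = m}"
    have coeffz: "(\<Sum>\<beta>'\<in>?Gm m. c \<beta>' * xpow x (\<beta>'(v := 0))) = 0" if m: "m \<in> (\<lambda>\<beta>. \<beta> v) ` G" for m x
    proof (rule univariate_zero[where a = "\<lambda>m. \<Sum>\<beta>'\<in>?Gm m. c \<beta>' * xpow x (\<beta>'(v := 0))", OF _ _ m])
      show "finite ((\<lambda>\<beta>. \<beta> v) ` G)" using fG by simp
      fix t :: complex
      have "0 = (\<Sum>\<beta>\<in>G. c \<beta> * xpow (x(v := t)) \<beta>)" using s by simp
      also have "\<dots> = (\<Sum>m\<in>(\<lambda>\<beta>. \<beta> v) ` G. \<Sum>\<beta>'\<in>?Gm m. c \<beta>' * xpow (x(v := t)) \<beta>')"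
        by (rule sum.image_gen[OF fG])
      also have "\<dots> = (\<Sum>m\<in>(\<lambda>\<beta>. \<beta> v) ` G. t ^ m * (\<Sum>\<beta>'\<in>?Gm m. c \<beta>' * xpow x (\<beta>'(v := 0))))"
      proof (rule sum.cong[OF refl])
        fix m
        have "c \<beta>' * xpow (x(v := t)) \<beta>' = t ^ m * (c \<beta>' * xpow x (\<beta>'(v := 0)))" if "\<beta>' \<in> ?Gm m" for \<beta>'
        proof -
          have "xpow (x(v := t)) \<beta>' = t ^ \<beta>' v * (\<Prod>j\<in>UNIV-{v}. (x(v:=t)) j ^ \<beta>' j)"
            using xpow_split[of "x(v:=t)" \<beta>' v] by simp
          also have "(\<Prod>j\<in>UNIV-{v}. (x(v:=t)) j ^ \<beta>' j) = (\<Prod>j\<in>UNIV-{v}. x j ^ \<beta>' j)"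
            by (rule prod.cong) auto
          finally have A: "xpow (x(v := t)) \<beta>' = t ^ \<beta>' v * (\<Prod>j\<in>UNIV-{v}. x j ^ \<beta>' j)" .
          show ?thesis unfolding A xpow_zero_outside using that by simp
        qed
        hence "(\<Sum>\<beta>'\<in>?Gm m. c \<beta>' * xpow (x(v := t)) \<beta>') = (\<Sum>\<beta>'\<in>?Gm m. t ^ m * (c \<beta>' * xpow x (\<beta>'(v := 0))))"
          by (rule sum.cong[OF refl])
        thus "(\<Sum>\<beta>'\<in>?Gm m. c \<beta>' * xpow (x(v := t)) \<beta>') = t ^ m * (\<Sum>\<beta>'\<in>?Gm m. c \<beta>' * xpow x (\<beta>'(v := 0)))"
          by (simp only: sum_distrib_left)
      qed
      finally show "(\<Sum>m\<in>(\<lambda>\<beta>. \<beta> v) ` G. t ^ m * (\<Sum>\<beta>'\<in>?Gm m. c \<beta>' * xpow x (\<beta>'(v := 0)))) = 0" by simp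
    qed
    let ?G' = "(\<lambda>\<beta>'. \<beta>'(v := 0)) ` ?Gm ?m"
    let ?c' = "\<lambda>\<beta>'. c (\<beta>'(v := ?m))"
    have inj: "inj_on (\<lambda>\<beta>'. \<beta>'(v := 0)) (?Gm ?m)"
    proof (rule inj_onI)
      fix b1 b2 assume "b1 \<in> ?Gm ?m" "b2 \<in> ?Gm ?m" "b1(v := 0) = b2(v := 0)"
      thus "b1 = b2" by (auto simp: fun_eq_iff) (metis fun_upd_apply)
    qed
    have "\<forall>\<beta>'\<in>?G'. ?c' \<beta>' = 0"
    proof (rule insert.IH[THEN spec, THEN spec, THEN mp, THEN mp, THEN mp])
      show "finite ?G'" using fG by simp
      show "\<forall>\<beta>'\<in>?G'. \<forall>j. j \<notin> V \<longrightarrow> \<beta>' j = 0" using z by auto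
      show "\<forall>x. (\<Sum>\<beta>'\<in>?G'. ?c' \<beta>' * xpow x \<beta>') = 0"
      proof
      fix x
      have "(\<Sum>\<beta>'\<in>?G'. ?c' \<beta>' * xpow x \<beta>') = (\<Sum>\<beta>'\<in>?Gm ?m. ?c' (\<beta>'(v := 0)) * xpow x (\<beta>'(v := 0)))"
        by (rule sum.reindex[OF inj, unfolded comp_def])
      also have "\<dots> = (\<Sum>\<beta>'\<in>?Gm ?m. c \<beta>' * xpow x (\<beta>'(v := 0)))"
        by (rule sum.cong[OF refl]) (auto intro!: arg_cong[where f=c])
      also have "\<dots> = 0" using coeffz[of ?m x] b by blast
      finally show "(\<Sum>\<beta>'\<in>?G'. ?c' \<beta>' * xpow x \<beta>') = 0" .
      qed
    qed
    moreover have "\<beta>(v := 0) \<in> ?G'" using b by blast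
    ultimately have "?c' (\<beta>(v := 0)) = 0" by blast
    thus "c \<beta> = 0" by simp
  qed
qed

lemma multivariate_zero:
  assumes "finite G" "\<And>x. (\<Sum>\<beta>\<in>G. c \<beta> * xpow x \<beta>) = (0::complex)" "\<beta> \<in> G"
  shows "c (\<beta> :: 'n::finite \<Rightarrow> nat) = 0"
  using multivariate_zero_aux[of "UNIV :: 'n set"] assms by auto

definition Img :: "'a set \<Rightarrow> ('a \<Rightarrow> 'b) \<Rightarrow> ('a \<Rightarrow> 'b) set" where
  "Img P g = {h \<in> P \<rightarrow>\<^sub>E UNIV. cnt P h = cnt P g}"

definition Stab :: "'a set \<Rightarrow> ('a \<Rightarrow> 'b) \<Rightarrow> ('a \<Rightarrow> 'a) set" where
  "Stab P g = {\<pi>. \<pi> permutes P \<and> (\<forall>r\<in>P. g (\<pi> r) = g r)}"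

lemma cnt_perm:
  assumes "\<sigma> permutes P"
  shows "cnt P (g \<circ> \<sigma>) = cnt P g"
proof
  fix j
  have e: "\<sigma> ` {r\<in>P. g (\<sigma> r) = j} = {r\<in>P. g r = j}"
  proof
    show "\<sigma> ` {r\<in>P. g (\<sigma> r) = j} \<subseteq> {r\<in>P. g r = j}" using permutes_in_image[OF assms] by auto
    show "{r\<in>P. g r = j} \<subseteq> \<sigma> ` {r\<in>P. g (\<sigma> r) = j}"
    proof
      fix r assume r: "r \<in> {r\<in>P. g r = j}"
      have "inv \<sigma> r \<in> P" using r permutes_in_image[OF permutes_inv[OF assms]] by auto
      moreover have "\<sigma> (inv \<sigma> r) = r" by (rule permutes_inverses(1)[OF assms])
      ultimately show "r \<in> \<sigma> ` {r\<in>P. g (\<sigma> r) = j}" using r by (metis (mono_tags, lifting) image_eqI mem_Collect_eq)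
    qed
  qed
  have i: "inj_on \<sigma> {r\<in>P. g (\<sigma> r) = j}" using permutes_inj_on[OF assms] .
  have "card {r\<in>P. g (\<sigma> r) = j} = card {r\<in>P. g r = j}" using card_image[OF i] unfolding e by simp
  thus "cnt P (g \<circ> \<sigma>) j = cnt P g j" by (simp add: cnt_def)
qed

lemma cnt_restrict: "cnt P (restrict h P) = cnt P h"
  by (auto simp: cnt_def fun_eq_iff intro!: arg_cong[where f=card])

lemma Img_image:
  assumes "finite P"
  shows "(\<lambda>\<sigma>. restrict (g \<circ> \<sigma>) P) ` {\<sigma>. \<sigma> permutes P} = Img P g"
proof
  show "(\<lambda>\<sigma>. restrict (g \<circ> \<sigma>) P) ` {\<sigma>. \<sigma> permutes P} \<subseteq> Img P g"
  proof (rule image_subsetI)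
    fix \<sigma> assume "\<sigma> \<in> {\<sigma>. \<sigma> permutes P}"
    hence "cnt P (restrict (g \<circ> \<sigma>) P) = cnt P g" unfolding cnt_restrict by (intro cnt_perm) simp
    thus "restrict (g \<circ> \<sigma>) P \<in> Img P g" by (simp add: Img_def)
  qed
  show "Img P g \<subseteq> (\<lambda>\<sigma>. restrict (g \<circ> \<sigma>) P) ` {\<sigma>. \<sigma> permutes P}"
  proof
    fix h assume h: "h \<in> Img P g"
    hence hE: "h \<in> P \<rightarrow>\<^sub>E UNIV" and hc: "cnt P h = cnt P g" by (auto simp: Img_def)
    have "\<exists>f. bij_betw f {r\<in>P. h r = j} {r\<in>P. g r = j}" for j
      using hc assms by (intro finite_same_card_bij) (auto simp: cnt_def fun_eq_iff)
    then obtain f where f: "\<And>j. bij_betw (f j) {r\<in>P. h r = j} {r\<in>P. g r = j}" by metis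
    define \<sigma> where "\<sigma> r = (if r \<in> P then f (h r) r else r)" for r
    have s1: "\<sigma> r \<in> P \<and> g (\<sigma> r) = h r" if "r \<in> P" for r
      using f[of "h r"] that unfolding \<sigma>_def bij_betw_def by auto
    have "bij_betw \<sigma> P P"
    proof (rule bij_betw_imageI)
      show "inj_on \<sigma> P"
      proof (rule inj_onI)
        fix r1 r2 assume r: "r1 \<in> P" "r2 \<in> P" "\<sigma> r1 = \<sigma> r2"
        hence hh: "h r1 = h r2" using s1 by metis
        have "f (h r1) r1 = f (h r1) r2" using r hh by (simp add: \<sigma>_def)
        moreover have "inj_on (f (h r1)) {r\<in>P. h r = h r1}" using f bij_betw_def by blast
        ultimately show "r1 = r2" using r hh by (auto dest: inj_onD)
      qed
      show "\<sigma> ` P = P"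
      proof
        show "\<sigma> ` P \<subseteq> P" using s1 by auto
        show "P \<subseteq> \<sigma> ` P"
        proof
          fix r' assume r': "r' \<in> P"
          have "r' \<in> f (g r') ` {r\<in>P. h r = g r'}" using f[of "g r'"] r' unfolding bij_betw_def by auto
          then obtain r where r: "r \<in> P" "h r = g r'" "r' = f (g r') r" by auto
          hence "\<sigma> r = r'" by (simp add: \<sigma>_def)
          thus "r' \<in> \<sigma> ` P" using r by auto
        qed
      qed
    qed
    hence perm: "\<sigma> permutes P" by (rule bij_imp_permutes) (simp add: \<sigma>_def)
    have "restrict (g \<circ> \<sigma>) P = h"
      using s1 hE by (auto simp: fun_eq_iff PiE_def extensional_def)
    thus "h \<in> (\<lambda>\<sigma>. restrict (g \<circ> \<sigma>) P) ` {\<sigma>. \<sigma> permutes P}" using perm by blast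
  qed
qed

lemma fiber_card:
  assumes "\<sigma>0 permutes P"
  shows "card {\<sigma>\<in>{\<sigma>. \<sigma> permutes P}. restrict (g \<circ> \<sigma>) P = restrict (g \<circ> \<sigma>0) P} = card (Stab P g)"
proof -
  have "bij_betw (\<lambda>\<pi>. \<pi> \<circ> \<sigma>0) (Stab P g) {\<sigma>\<in>{\<sigma>. \<sigma> permutes P}. restrict (g \<circ> \<sigma>) P = restrict (g \<circ> \<sigma>0) P}"
  proof (rule bij_betw_byWitness[where f'="\<lambda>\<sigma>. \<sigma> \<circ> inv \<sigma>0"])
    show "\<forall>a\<in>Stab P g. a \<circ> \<sigma>0 \<circ> inv \<sigma>0 = a"
      using permutes_inv_o(1)[OF assms] by (simp add: comp_assoc)
    show "\<forall>a\<in>{\<sigma>\<in>{\<sigma>. \<sigma> permutes P}. restrict (g \<circ> \<sigma>) P = restrict (g \<circ> \<sigma>0) P}. a \<circ> inv \<sigma>0 \<circ> \<sigma>0 = a"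
      using permutes_inv_o(2)[OF assms] by (simp add: comp_assoc)
    show "(\<lambda>\<pi>. \<pi> \<circ> \<sigma>0) ` Stab P g \<subseteq> {\<sigma>\<in>{\<sigma>. \<sigma> permutes P}. restrict (g \<circ> \<sigma>) P = restrict (g \<circ> \<sigma>0) P}"
    proof (rule image_subsetI)
      fix \<pi> assume "\<pi> \<in> Stab P g"
      hence \<pi>: "\<pi> permutes P" "\<forall>r\<in>P. g (\<pi> r) = g r" by (auto simp: Stab_def)
      have "\<pi> \<circ> \<sigma>0 permutes P" by (rule permutes_compose[OF assms \<pi>(1)])
      moreover have "restrict (g \<circ> (\<pi> \<circ> \<sigma>0)) P = restrict (g \<circ> \<sigma>0) P"
        using \<pi>(2) permutes_in_image[OF assms] by (auto simp: fun_eq_iff)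
      ultimately show "\<pi> \<circ> \<sigma>0 \<in> {\<sigma>\<in>{\<sigma>. \<sigma> permutes P}. restrict (g \<circ> \<sigma>) P = restrict (g \<circ> \<sigma>0) P}" by simp
    qed
    show "(\<lambda>\<sigma>. \<sigma> \<circ> inv \<sigma>0) ` {\<sigma>\<in>{\<sigma>. \<sigma> permutes P}. restrict (g \<circ> \<sigma>) P = restrict (g \<circ> \<sigma>0) P} \<subseteq> Stab P g"
    proof (rule image_subsetI)
      fix \<sigma> assume "\<sigma> \<in> {\<sigma>\<in>{\<sigma>. \<sigma> permutes P}. restrict (g \<circ> \<sigma>) P = restrict (g \<circ> \<sigma>0) P}"
      hence \<sigma>: "\<sigma> permutes P" "\<forall>r\<in>P. g (\<sigma> r) = g (\<sigma>0 r)" by (auto simp: fun_eq_iff restrict_def) (metis comp_apply)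
      have i: "inv \<sigma>0 permutes P" by (rule permutes_inv[OF assms])
      have "\<sigma> \<circ> inv \<sigma>0 permutes P" by (rule permutes_compose[OF i \<sigma>(1)])
      moreover have "g (\<sigma> (inv \<sigma>0 r)) = g r" if "r \<in> P" for r
      proof -
        have "inv \<sigma>0 r \<in> P" using permutes_in_image[OF i] that by simp
        hence "g (\<sigma> (inv \<sigma>0 r)) = g (\<sigma>0 (inv \<sigma>0 r))" using \<sigma>(2) by blast
        also have "\<dots> = g r" using permutes_inverses(1)[OF assms] by simp
        finally show ?thesis .
      qed
      ultimately show "\<sigma> \<circ> inv \<sigma>0 \<in> Stab P g" by (simp add: Stab_def)
    qed
  qed
  thus ?thesis by (simp add: bij_betw_same_card)
qed

lemma fiber_sum:
  fixes F :: "('a \<Rightarrow> 'b) \<Rightarrow> 'c::comm_semiring_1"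
  assumes "finite P"
  shows "(\<Sum>\<sigma>\<in>{\<sigma>. \<sigma> permutes P}. F (restrict (g \<circ> \<sigma>) P)) = of_nat (card (Stab P g)) * (\<Sum>h\<in>Img P g. F h)"
proof -
  let ?Perm = "{\<sigma>. \<sigma> permutes P}"
  let ?\<phi> = "\<lambda>\<sigma>. restrict (g \<circ> \<sigma>) P"
  have fin: "finite ?Perm" by (rule finite_permutations[OF assms])
  have "(\<Sum>\<sigma>\<in>?Perm. F (?\<phi> \<sigma>)) = (\<Sum>h\<in>?\<phi> ` ?Perm. \<Sum>\<sigma>\<in>{\<sigma>\<in>?Perm. ?\<phi> \<sigma> = h}. F (?\<phi> \<sigma>))"
    by (rule sum.image_gen[OF fin])
  also have "\<dots> = (\<Sum>h\<in>?\<phi> ` ?Perm. of_nat (card (Stab P g)) * F h)"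
  proof (rule sum.cong[OF refl])
    fix h assume "h \<in> ?\<phi> ` ?Perm"
    then obtain \<sigma>0 where s0: "\<sigma>0 permutes P" "h = ?\<phi> \<sigma>0" by auto
    have "(\<Sum>\<sigma>\<in>{\<sigma>\<in>?Perm. ?\<phi> \<sigma> = h}. F (?\<phi> \<sigma>)) = (\<Sum>\<sigma>\<in>{\<sigma>\<in>?Perm. ?\<phi> \<sigma> = h}. F h)"
      by (rule sum.cong) auto
    also have "\<dots> = of_nat (card {\<sigma>\<in>?Perm. ?\<phi> \<sigma> = h}) * F h" by simp
    also have "card {\<sigma>\<in>?Perm. ?\<phi> \<sigma> = h} = card (Stab P g)" using fiber_card[OF s0(1), of g] s0(2) by simp
    finally show "(\<Sum>\<sigma>\<in>{\<sigma>\<in>?Perm. ?\<phi> \<sigma> = h}. F (?\<phi> \<sigma>)) = of_nat (card (Stab P g)) * F h" .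
  qed
  also have "\<dots> = of_nat (card (Stab P g)) * (\<Sum>h\<in>Img P g. F h)"
    by (simp add: Img_image[OF assms] sum_distrib_left)
  finally show ?thesis .
qed

lemma Stab_nonempty: "finite P \<Longrightarrow> card (Stab P g) > 0"
proof -
  assume f: "finite P"
  have "id \<in> Stab P g" by (simp add: Stab_def)
  moreover have "finite (Stab P g)" using finite_permutations[OF f] by (rule finite_subset[rotated]) (auto simp: Stab_def)
  ultimately show ?thesis by (auto simp: card_gt_0_iff)
qed

lemma xpow_cnt:
  assumes "finite P"
  shows "xpow x (cnt P h) = (\<Prod>r\<in>P. x (h r))"
proof -
  have "(\<Prod>r\<in>P. x (h r)) = (\<Prod>j\<in>UNIV. \<Prod>r\<in>{r\<in>P. h r = j}. x (h r))"
    by (rule prod.group[symmetric]) (auto simp: assms)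
  also have "\<dots> = (\<Prod>j\<in>UNIV. x j ^ cnt P h j)"
  proof (rule prod.cong[OF refl])
    fix j
    have "(\<Prod>r\<in>{r\<in>P. h r = j}. x (h r)) = (\<Prod>r\<in>{r\<in>P. h r = j}. x j)" by (rule prod.cong) auto
    thus "(\<Prod>r\<in>{r\<in>P. h r = j}. x (h r)) = x j ^ cnt P h j" by (simp add: cnt_def)
  qed
  finally show ?thesis by (simp add: xpow_def)
qed

lemma sum_PiE_split:
  fixes f :: "nat \<Rightarrow> ('a \<Rightarrow> 'b) \<Rightarrow> 'c::comm_semiring_1"
  assumes fin: "\<And>i. finite (C i)" "finite (UNIV :: 'b set)"
    and idx: "\<And>i r. i < p \<Longrightarrow> r \<in> C i \<Longrightarrow> idx r = i"
  shows "(\<Sum>h\<in>(\<Union>i<p. C i) \<rightarrow>\<^sub>E (UNIV::'b set). \<Prod>i<p. f i (restrict h (C i))) =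
         (\<Prod>i<p. \<Sum>y\<in>C i \<rightarrow>\<^sub>E (UNIV::'b set). f i y)"
proof -
  let ?B = "\<lambda>i. C i \<rightarrow>\<^sub>E (UNIV::'b set)"
  let ?P = "\<Union>i<p. C i"
  have key: "restrict (\<lambda>r. if r \<in> ?P then H (idx r) r else undefined) (C i) = H i"
    if H: "H \<in> PiE {..<p} ?B" and i: "i < p" for H i
  proof (rule ext)
    fix r
    have Hi: "H i \<in> C i \<rightarrow>\<^sub>E UNIV" using H i by auto
    show "restrict (\<lambda>r. if r \<in> ?P then H (idx r) r else undefined) (C i) r = H i r"
    proof (cases "r \<in> C i")
      case True thus ?thesis using idx[OF i True] i by auto
    next
      case False thus ?thesis using Hi by (auto simp: PiE_def extensional_def)
    qed
  qed
  have "(\<Prod>i<p. \<Sum>y\<in>?B i. f i y) = (\<Sum>H\<in>PiE {..<p} ?B. \<Prod>i<p. f i (H i))"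
    by (rule prod_sum_PiE) (auto intro: finite_PiE fin)
  also have "\<dots> = (\<Sum>h\<in>?P \<rightarrow>\<^sub>E UNIV. \<Prod>i<p. f i (restrict h (C i)))"
  proof (rule sum.reindex_bij_witness[of _ "\<lambda>h. \<lambda>i\<in>{..<p}. restrict h (C i)" "\<lambda>H r. if r \<in> ?P then H (idx r) r else undefined"])
    fix H assume H: "H \<in> PiE {..<p} ?B"
    show "(\<lambda>i\<in>{..<p}. restrict (\<lambda>r. if r \<in> ?P then H (idx r) r else undefined) (C i)) = H"
    proof (rule ext)
      fix i show "(\<lambda>i\<in>{..<p}. restrict (\<lambda>r. if r \<in> ?P then H (idx r) r else undefined) (C i)) i = H i"
      proof (cases "i < p")
        case True
        thus ?thesis using key[OF H True] by simp
      next
        case False thus ?thesis using H by (auto simp: PiE_def extensional_def)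
      qed
    qed
    show "(\<lambda>r. if r \<in> ?P then H (idx r) r else undefined) \<in> ?P \<rightarrow>\<^sub>E UNIV" by auto
  next
    fix h assume h: "h \<in> ?P \<rightarrow>\<^sub>E (UNIV :: 'b set)"
    show "(\<lambda>r. if r \<in> ?P then (\<lambda>i\<in>{..<p}. restrict h (C i)) (idx r) r else undefined) = h"
    proof (rule ext)
      fix r show "(if r \<in> ?P then (\<lambda>i\<in>{..<p}. restrict h (C i)) (idx r) r else undefined) = h r"
        using h idx by (auto simp: PiE_def extensional_def)
    qed
    show "(\<lambda>i\<in>{..<p}. restrict h (C i)) \<in> PiE {..<p} ?B" by auto
  next
    fix H assume H: "H \<in> PiE {..<p} ?B"
    have "restrict (\<lambda>r. if r \<in> ?P then H (idx r) r else undefined) (C i) = H i" if "i < p" for i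
      by (rule key[OF H that])
    thus "(\<Prod>i<p. f i (restrict (\<lambda>r. if r \<in> ?P then H (idx r) r else undefined) (C i))) = (\<Prod>i<p. f i (H i))"
      by (intro prod.cong) auto
  qed
  finally show ?thesis by simp
qed

lemma cnt_restrict_sub: "C \<subseteq> P \<Longrightarrow> cnt C (restrict h P) = cnt C h"
  by (auto simp: cnt_def fun_eq_iff intro!: arg_cong[where f=card])

definition Qw :: "('n \<Rightarrow> ('n \<Rightarrow> nat) \<Rightarrow> complex) \<Rightarrow> nat \<Rightarrow> (nat \<Rightarrow> 'a set) \<Rightarrow> (nat \<Rightarrow> 'n) \<Rightarrow> ('a \<Rightarrow> 'n) \<Rightarrow> complex" where
  "Qw Hc p C u h = (\<Prod>i<p. Hc (u i) ((cnt (C i) h)(u (Suc i) := Suc (cnt (C i) h (u (Suc i))))))"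

lemma poly_vanish:
  fixes Hc :: "'n::finite \<Rightarrow> ('n \<Rightarrow> nat) \<Rightarrow> complex"
  assumes d: "d \<ge> 1" and fin: "\<And>i. finite (C i)" and cardC: "\<And>i. i < p \<Longrightarrow> card (C i) = d - 1"
    and idx: "\<And>i r. i < p \<Longrightarrow> r \<in> C i \<Longrightarrow> idx r = i"
    and nil: "\<forall>x. matpow (jacobian d Hc x) p = 0"
  shows "(\<Sum>h\<in>Img (\<Union>i<p. C i) g. \<Sum>u\<in>paths p a b. Qw Hc p C u h) = 0"
proof -
  let ?P = "\<Union>i<p. C i"
  have finP: "finite ?P" using fin by auto
  let ?c = "\<lambda>\<gamma>. \<Sum>h\<in>{h\<in>?P \<rightarrow>\<^sub>E (UNIV::'n set). cnt ?P h = \<gamma>}. \<Sum>u\<in>paths p a b. Qw Hc p C u h"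
  let ?\<Gamma> = "cnt ?P ` (?P \<rightarrow>\<^sub>E (UNIV::'n set))"
  have finE: "finite (?P \<rightarrow>\<^sub>E (UNIV::'n set))" using finP by (auto intro: finite_PiE)
  have disj: "C i \<inter> C j = {}" if "i < p" "j < p" "i \<noteq> j" for i j
    using idx that by blast
  have main: "(\<Sum>\<gamma>\<in>?\<Gamma>. ?c \<gamma> * xpow x \<gamma>) = 0" for x
  proof -
    have "(\<Sum>\<gamma>\<in>?\<Gamma>. ?c \<gamma> * xpow x \<gamma>) = (\<Sum>\<gamma>\<in>?\<Gamma>. \<Sum>h\<in>{h\<in>?P \<rightarrow>\<^sub>E (UNIV::'n set). cnt ?P h = \<gamma>}. (\<Sum>u\<in>paths p a b. Qw Hc p C u h) * xpow x (cnt ?P h))"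
      by (rule sum.cong[OF refl]) (simp add: sum_distrib_right)
    also have "\<dots> = (\<Sum>h\<in>?P \<rightarrow>\<^sub>E (UNIV::'n set). (\<Sum>u\<in>paths p a b. Qw Hc p C u h) * xpow x (cnt ?P h))"
      by (rule sum.image_gen[OF finE, symmetric])
    also have "\<dots> = (\<Sum>u\<in>paths p a b. \<Sum>h\<in>?P \<rightarrow>\<^sub>E (UNIV::'n set).
        \<Prod>i<p. Hc (u i) ((cnt (C i) (restrict h (C i)))(u (Suc i) := Suc (cnt (C i) (restrict h (C i)) (u (Suc i))))) * (\<Prod>r\<in>C i. x (restrict h (C i) r)))"
    proof -
      have "(\<Sum>u\<in>paths p a b. Qw Hc p C u h) * xpow x (cnt ?P h) = (\<Sum>u\<in>paths p a b.
        \<Prod>i<p. Hc (u i) ((cnt (C i) (restrict h (C i)))(u (Suc i) := Suc (cnt (C i) (restrict h (C i)) (u (Suc i))))) * (\<Prod>r\<in>C i. x (restrict h (C i) r)))"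
        for h
      proof -
        have x1: "xpow x (cnt ?P h) = (\<Prod>i<p. \<Prod>r\<in>C i. x (restrict h (C i) r))"
          unfolding xpow_cnt[OF finP] using disj fin by (subst prod.UNION_disjoint) auto
        show ?thesis unfolding x1 sum_distrib_right Qw_def
          by (rule sum.cong[OF refl]) (simp add: prod.distrib cnt_restrict_sub)
      qed
      thus ?thesis by (simp add: sum.swap[of _ "paths p a b"])
    qed
    also have "\<dots> = (\<Sum>u\<in>paths p a b. \<Prod>i<p. \<Sum>y\<in>C i \<rightarrow>\<^sub>E (UNIV::'n set).
        Hc (u i) ((cnt (C i) y)(u (Suc i) := Suc (cnt (C i) y (u (Suc i))))) * (\<Prod>r\<in>C i. x (y r)))"
      by (rule sum.cong[OF refl], rule sum_PiE_split[OF fin _ idx]) auto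
    also have "\<dots> = (\<Sum>u\<in>paths p a b. \<Prod>i<p. of_nat (fact (d-1)) * jacobian d Hc x $ u i $ u (Suc i))"
      by (rule sum.cong[OF refl], rule prod.cong[OF refl], rule vertex_lemma[OF d fin cardC]) auto
    also have "\<dots> = of_nat (fact (d-1)) ^ p * (\<Sum>u\<in>paths p a b. \<Prod>i<p. jacobian d Hc x $ u i $ u (Suc i))"
      by (simp add: prod.distrib sum_distrib_left)
    also have "\<dots> = of_nat (fact (d-1)) ^ p * (matpow (jacobian d Hc x) p $ a $ b)"
      by (simp add: matpow_paths)
    also have "\<dots> = 0" using nil by simp
    finally show ?thesis .
  qed
  have "?c (cnt ?P g) = 0"
  proof (rule multivariate_zero[where G="?\<Gamma>"])
    show "finite ?\<Gamma>" using finE by simp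
    show "\<And>x. (\<Sum>\<gamma>\<in>?\<Gamma>. ?c \<gamma> * xpow x \<gamma>) = 0" by (rule main)
    have "restrict g ?P \<in> ?P \<rightarrow>\<^sub>E UNIV" by simp
    moreover have "cnt ?P (restrict g ?P) = cnt ?P g" by (rule cnt_restrict)
    ultimately show "cnt ?P g \<in> ?\<Gamma>" by (metis image_eqI)
  qed
  thus ?thesis by (simp add: Img_def)
qed

lemma prefix_cases: "q @ x = q' @ y \<Longrightarrow> (\<exists>z. q = q' @ z) \<or> (\<exists>z. q' = q @ z)"
  by (auto simp: append_eq_append_conv2)

locale shuf =
  fixes T :: "nat list set" and P :: "nat list set"
  assumes finT: "finite T"
    and nilT: "[] \<in> T"
    and PT: "P \<subseteq> T"
    and anti: "\<And>q q' z. q \<in> P \<Longrightarrow> q' \<in> P \<Longrightarrow> q = q' @ z \<Longrightarrow> z = []"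
    and nilP: "[] \<notin> P"
    and closed: "\<And>v c. v @ [c] \<in> T \<Longrightarrow> v \<in> T"
begin

definition isext :: "nat list \<Rightarrow> bool" where "isext w \<longleftrightarrow> (\<exists>q\<in>P. \<exists>u. w = q @ u)"
definition Ou :: "nat list set" where "Ou = {w\<in>T. \<not> isext w}"
definition pre :: "nat list \<Rightarrow> nat list" where "pre w = (THE q. q \<in> P \<and> (\<exists>u. w = q @ u))"
definition Tsh :: "(nat list \<Rightarrow> nat list) \<Rightarrow> nat list set" where
  "Tsh \<sigma> = Ou \<union> (\<Union>q\<in>P. (\<lambda>w. q @ w) ` subtree_at T (\<sigma> q))"
definition Th :: "(nat list \<Rightarrow> nat list) \<Rightarrow> nat list \<Rightarrow> nat list" where
  "Th \<sigma> w = (if isext w then \<sigma> (pre w) @ drop (length (pre w)) w else w)"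
definition Par :: "nat list set" where "Par = {w. \<exists>c. w @ [c] \<in> P}"

lemma same_pre: "q \<in> P \<Longrightarrow> q' \<in> P \<Longrightarrow> q @ x = q' @ y \<Longrightarrow> q = q' \<and> x = y"
proof -
  assume a: "q \<in> P" "q' \<in> P" "q @ x = q' @ y"
  from prefix_cases[OF a(3)] have "q = q'"
  proof
    assume "\<exists>z. q = q' @ z" then obtain z where "q = q' @ z" by blast
    thus ?thesis using anti[OF a(1,2)] by auto
  next
    assume "\<exists>z. q' = q @ z" then obtain z where "q' = q @ z" by blast
    thus ?thesis using anti[OF a(2,1)] by auto
  qed
  thus ?thesis using a(3) by simp
qed

lemma pre_eq: "q \<in> P \<Longrightarrow> pre (q @ u) = q"
  unfolding pre_def
  by (rule the_equality) (auto dest: same_pre)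

lemma isext_app: "q \<in> P \<Longrightarrow> isext (q @ u)"
  unfolding isext_def by blast

lemma Th_ext: "q \<in> P \<Longrightarrow> Th \<sigma> (q @ u) = \<sigma> q @ u"
  by (simp add: Th_def isext_app pre_eq)

lemma Th_nonext: "\<not> isext w \<Longrightarrow> Th \<sigma> w = w"
  by (simp add: Th_def)

lemma mem_Tsh: "q \<in> P \<Longrightarrow> (q @ x \<in> Tsh \<sigma> \<longleftrightarrow> \<sigma> q @ x \<in> T)"
proof
  assume q: "q \<in> P" and m: "q @ x \<in> Tsh \<sigma>"
  have "q @ x \<notin> Ou" using q by (auto simp: Ou_def isext_def)
  then obtain q' w where q': "q' \<in> P" "w \<in> subtree_at T (\<sigma> q')" "q @ x = q' @ w"
    using m by (auto simp: Tsh_def)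
  thus "\<sigma> q @ x \<in> T" using same_pre[OF q q'(1) q'(3)] by (simp add: subtree_at_def)
next
  assume q: "q \<in> P" and m: "\<sigma> q @ x \<in> T"
  thus "q @ x \<in> Tsh \<sigma>" by (auto simp: Tsh_def subtree_at_def)
qed

lemma Tsh_cases: "w \<in> Tsh \<sigma> \<Longrightarrow> (w \<in> T \<and> \<not> isext w) \<or> (\<exists>q\<in>P. \<exists>u. w = q @ u \<and> \<sigma> q @ u \<in> T)"
  by (auto simp: Tsh_def Ou_def subtree_at_def)

lemma Ou_sub: "w \<in> T \<Longrightarrow> \<not> isext w \<Longrightarrow> w \<in> Tsh \<sigma>"
  by (simp add: Tsh_def Ou_def)

lemma Th_bij:
  assumes s: "\<sigma> permutes P"
  shows "bij_betw (Th \<sigma>) (Tsh \<sigma>) T"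
proof (rule bij_betw_imageI)
  show "inj_on (Th \<sigma>) (Tsh \<sigma>)"
  proof (rule inj_onI)
    fix w1 w2 assume w: "w1 \<in> Tsh \<sigma>" "w2 \<in> Tsh \<sigma>" "Th \<sigma> w1 = Th \<sigma> w2"
    show "w1 = w2"
    proof (cases "isext w1")
      case False
      note f1 = False
      show ?thesis
      proof (cases "isext w2")
        case False thus ?thesis using f1 w by (simp add: Th_nonext)
      next
        case True
        then obtain q u where qu: "q \<in> P" "w2 = q @ u" by (auto simp: isext_def)
        have "w1 = \<sigma> q @ u" using w(3) f1 qu by (simp add: Th_nonext Th_ext)
        moreover have "\<sigma> q \<in> P" using permutes_in_image[OF s] qu by simp
        ultimately show ?thesis using f1 isext_app by blast
      qed
    next
      case True
      then obtain q u where qu: "q \<in> P" "w1 = q @ u" by (auto simp: isext_def)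
      show ?thesis
      proof (cases "isext w2")
        case False
        have "w2 = \<sigma> q @ u" using w(3) False qu by (simp add: Th_nonext Th_ext)
        moreover have "\<sigma> q \<in> P" using permutes_in_image[OF s] qu by simp
        ultimately show ?thesis using False isext_app by blast
      next
        case True
        then obtain q' u' where qu': "q' \<in> P" "w2 = q' @ u'" by (auto simp: isext_def)
        have "\<sigma> q @ u = \<sigma> q' @ u'" using w(3) qu qu' by (simp add: Th_ext)
        moreover have "\<sigma> q \<in> P" "\<sigma> q' \<in> P" using permutes_in_image[OF s] qu qu' by auto
        ultimately have "\<sigma> q = \<sigma> q'" "u = u'" using same_pre by blast+
        hence "q = q'" using permutes_inj[OF s] by (auto dest: injD)
        thus ?thesis using qu qu' \<open>u = u'\<close> by simp
      qed
    qed
  qed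
  show "Th \<sigma> ` Tsh \<sigma> = T"
  proof
    show "Th \<sigma> ` Tsh \<sigma> \<subseteq> T"
    proof
      fix y assume "y \<in> Th \<sigma> ` Tsh \<sigma>"
      then obtain w where w: "w \<in> Tsh \<sigma>" "y = Th \<sigma> w" by auto
      from Tsh_cases[OF w(1)] show "y \<in> T"
        using w by (auto simp: Th_nonext Th_ext)
    qed
    show "T \<subseteq> Th \<sigma> ` Tsh \<sigma>"
    proof
      fix w assume w: "w \<in> T"
      show "w \<in> Th \<sigma> ` Tsh \<sigma>"
      proof (cases "isext w")
        case False thus ?thesis using w Ou_sub[OF w False] Th_nonext[OF False] by (metis image_eqI)
      next
        case True
        then obtain r u where ru: "r \<in> P" "w = r @ u" by (auto simp: isext_def)
        let ?q = "inv \<sigma> r"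
        have q: "?q \<in> P" using permutes_in_image[OF permutes_inv[OF s]] ru by simp
        have sq: "\<sigma> ?q = r" by (rule permutes_inverses(1)[OF s])
        have "?q @ u \<in> Tsh \<sigma>" using mem_Tsh[OF q] sq ru w by simp
        moreover have "Th \<sigma> (?q @ u) = w" using Th_ext[OF q] sq ru by simp
        ultimately show ?thesis by (metis image_eqI)
      qed
    qed
  qed
qed

lemma Th_surj: "\<sigma> permutes P \<Longrightarrow> w \<in> T \<Longrightarrow> \<exists>v\<in>Tsh \<sigma>. w = Th \<sigma> v"
  using bij_betw_imp_surj_on[OF Th_bij] by (metis imageE)

lemma Th_inj: "\<sigma> permutes P \<Longrightarrow> inj_on (Th \<sigma>) (Tsh \<sigma>)"
  using bij_betw_imp_inj_on[OF Th_bij] .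

lemma child:
  assumes w: "w \<in> Tsh \<sigma>" and c: "w @ [c] \<notin> P"
  shows "Th \<sigma> (w @ [c]) = Th \<sigma> w @ [c] \<and> (w @ [c] \<in> Tsh \<sigma> \<longleftrightarrow> Th \<sigma> w @ [c] \<in> T)"
proof (cases "isext w")
  case True
  then obtain q u where qu: "q \<in> P" "w = q @ u" by (auto simp: isext_def)
  show ?thesis using qu Th_ext[OF qu(1), of \<sigma> u] Th_ext[OF qu(1), of \<sigma> "u @ [c]"] mem_Tsh[OF qu(1), of "u @ [c]" \<sigma>]
    by simp
next
  case False
  have ne: "\<not> isext (w @ [c])"
  proof
    assume "isext (w @ [c])"
    then obtain q y where qy: "q \<in> P" "w @ [c] = q @ y" by (auto simp: isext_def)
    show False
    proof (cases y rule: rev_cases)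
      case Nil thus False using qy c by simp
    next
      case (snoc y' c')
      hence "w = q @ y'" using qy by simp
      thus False using False qy isext_app by blast
    qed
  qed
  have "w @ [c] \<in> Tsh \<sigma> \<longleftrightarrow> w @ [c] \<in> T"
  proof
    assume "w @ [c] \<in> Tsh \<sigma>"
    from Tsh_cases[OF this] show "w @ [c] \<in> T" using ne by (auto simp: isext_def)
  next
    assume "w @ [c] \<in> T" thus "w @ [c] \<in> Tsh \<sigma>" using Ou_sub ne by blast
  qed
  thus ?thesis using False ne by (simp add: Th_nonext)
qed

lemma Par_props:
  assumes "w \<in> Par"
  shows "\<not> isext w" "w \<in> T" "w \<in> internal_vertices T"
proof -
  obtain c where c: "w @ [c] \<in> P" using assms by (auto simp: Par_def)
  show "\<not> isext w"
  proof
    assume "isext w"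
    then obtain q u where "q \<in> P" "w = q @ u" by (auto simp: isext_def)
    thus False using anti[OF c, of q "u @ [c]"] by simp
  qed
  show "w \<in> T" using c PT closed by blast
  thus "w \<in> internal_vertices T" using c PT by (auto simp: internal_vertices_def)
qed

lemma P_Tsh: "\<sigma> permutes P \<Longrightarrow> q \<in> P \<Longrightarrow> q \<in> Tsh \<sigma>"
  using mem_Tsh[of q "[]" \<sigma>] PT permutes_in_image by fastforce

lemma Par_int: "\<sigma> permutes P \<Longrightarrow> w \<in> Par \<Longrightarrow> w \<in> internal_vertices (Tsh \<sigma>)"
  using P_Tsh Par_props(2,1) Ou_sub by (auto simp: internal_vertices_def Par_def)

lemma int_iff:
  assumes s: "\<sigma> permutes P" and w: "w \<in> Tsh \<sigma>"
  shows "w \<in> internal_vertices (Tsh \<sigma>) \<longleftrightarrow> Th \<sigma> w \<in> internal_vertices T"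
proof (cases "w \<in> Par")
  case True
  thus ?thesis using Par_int[OF s True] Par_props[OF True] by (simp add: Th_nonext)
next
  case False
  hence np: "\<And>c. w @ [c] \<notin> P" by (auto simp: Par_def)
  have "Th \<sigma> w \<in> T" by (rule bij_betw_apply[OF Th_bij[OF s] w])
  thus ?thesis using child[OF w np] w by (auto simp: internal_vertices_def)
qed

lemma leaf_iff:
  assumes s: "\<sigma> permutes P" and w: "w \<in> Tsh \<sigma>"
  shows "w \<in> leaves (Tsh \<sigma>) \<longleftrightarrow> Th \<sigma> w \<in> leaves T"
proof -
  have "Th \<sigma> w \<in> T" by (rule bij_betw_apply[OF Th_bij[OF s] w])
  thus ?thesis using int_iff[OF s w] w by (auto simp: internal_vertices_def leaves_def)
qed

lemma ctc_eq:
  assumes s: "\<sigma> permutes P" and w: "w \<in> Tsh \<sigma>" and np: "\<And>c. w @ [c] \<notin> P"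
  shows "child_type_count (Tsh \<sigma>) (\<lambda>v. \<tau> (Th \<sigma> v)) w = child_type_count T \<tau> (Th \<sigma> w)"
proof -
  have "{c. w @ [c] \<in> Tsh \<sigma> \<and> \<tau> (Th \<sigma> (w @ [c])) = j} = {c. Th \<sigma> w @ [c] \<in> T \<and> \<tau> (Th \<sigma> w @ [c]) = j}" for j
    using child[OF w np] by auto
  thus ?thesis by (simp add: child_type_count_def)
qed

end

context shuf
begin

lemma nil_Tsh: "[] \<in> Tsh \<sigma>" and Th_nil: "Th \<sigma> [] = []"
proof -
  have ne: "\<not> isext []" using nilP by (auto simp: isext_def)
  show "[] \<in> Tsh \<sigma>" using Ou_sub[OF nilT ne] .
  show "Th \<sigma> [] = []" using Th_nonext[OF ne] .
qed

lemma labelling_iff: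
  assumes s: "\<sigma> permutes P"
  shows "is_labelling (Tsh \<sigma>) i \<alpha> (restrict (\<lambda>v. \<tau> (Th \<sigma> v)) (Tsh \<sigma>)) \<longleftrightarrow> is_labelling T i \<alpha> \<tau>"
proof -
  have bij: "bij_betw (Th \<sigma>) (Tsh \<sigma>) T" by (rule Th_bij[OF s])
  have lsub: "leaves (Tsh \<sigma>) \<subseteq> Tsh \<sigma>" by (auto simp: leaves_def)
  have "card {v \<in> leaves (Tsh \<sigma>). restrict (\<lambda>v. \<tau> (Th \<sigma> v)) (Tsh \<sigma>) v = j} = card {w \<in> leaves T. \<tau> w = j}" for j
  proof -
    have e1: "{v \<in> leaves (Tsh \<sigma>). restrict (\<lambda>v. \<tau> (Th \<sigma> v)) (Tsh \<sigma>) v = j} = {v \<in> leaves (Tsh \<sigma>). \<tau> (Th \<sigma> v) = j}"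
    proof (rule Collect_cong)
      fix v
      show "(v \<in> leaves (Tsh \<sigma>) \<and> restrict (\<lambda>v. \<tau> (Th \<sigma> v)) (Tsh \<sigma>) v = j) \<longleftrightarrow> (v \<in> leaves (Tsh \<sigma>) \<and> \<tau> (Th \<sigma> v) = j)"
      proof (cases "v \<in> leaves (Tsh \<sigma>)")
        case True
        hence "restrict (\<lambda>v. \<tau> (Th \<sigma> v)) (Tsh \<sigma>) v = \<tau> (Th \<sigma> v)" using lsub by auto
        thus ?thesis by simp
      qed simp
    qed
    have e2: "Th \<sigma> ` {v \<in> leaves (Tsh \<sigma>). \<tau> (Th \<sigma> v) = j} = {w \<in> leaves T. \<tau> w = j}"
    proof
      show "Th \<sigma> ` {v \<in> leaves (Tsh \<sigma>). \<tau> (Th \<sigma> v) = j} \<subseteq> {w \<in> leaves T. \<tau> w = j}"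
      proof (rule image_subsetI)
        fix v assume v: "v \<in> {v \<in> leaves (Tsh \<sigma>). \<tau> (Th \<sigma> v) = j}"
        hence "v \<in> Tsh \<sigma>" using lsub by blast
        thus "Th \<sigma> v \<in> {w \<in> leaves T. \<tau> w = j}" using leaf_iff[OF s, of v] v by blast
      qed
      show "{w \<in> leaves T. \<tau> w = j} \<subseteq> Th \<sigma> ` {v \<in> leaves (Tsh \<sigma>). \<tau> (Th \<sigma> v) = j}"
      proof
        fix w assume w: "w \<in> {w \<in> leaves T. \<tau> w = j}"
        hence "w \<in> T" by (auto simp: leaves_def)
        then obtain v where v: "v \<in> Tsh \<sigma>" "w = Th \<sigma> v" using Th_surj[OF s] by blast
        hence "v \<in> leaves (Tsh \<sigma>)" using leaf_iff[OF s v(1)] w by simp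
        thus "w \<in> Th \<sigma> ` {v \<in> leaves (Tsh \<sigma>). \<tau> (Th \<sigma> v) = j}" using v w by auto
      qed
    qed
    have inj: "inj_on (Th \<sigma>) {v \<in> leaves (Tsh \<sigma>). \<tau> (Th \<sigma> v) = j}"
      using Th_inj[OF s] lsub by (blast intro: inj_on_subset)
    have "card (Th \<sigma> ` {v \<in> leaves (Tsh \<sigma>). \<tau> (Th \<sigma> v) = j}) = card {v \<in> leaves (Tsh \<sigma>). \<tau> (Th \<sigma> v) = j}"
      by (rule card_image[OF inj])
    thus ?thesis unfolding e1 e2 by (rule sym)
  qed
  note ce = this
  have re: "restrict (\<lambda>v. \<tau> (Th \<sigma> v)) (Tsh \<sigma>) [] = \<tau> []" using nil_Tsh Th_nil by simp
  show ?thesis unfolding is_labelling_def re ce ..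
qed

lemma E_Tsh:
  assumes s: "\<sigma> permutes P"
  shows "E_weight Hc i \<alpha> (Tsh \<sigma>) = (\<Sum>\<tau>\<in>{\<tau> \<in> T \<rightarrow>\<^sub>E UNIV. is_labelling T i \<alpha> \<tau>}.
     \<Prod>v\<in>internal_vertices (Tsh \<sigma>). Hc (\<tau> (Th \<sigma> v)) (child_type_count (Tsh \<sigma>) (\<lambda>v. \<tau> (Th \<sigma> v)) v))"
proof -
  have bij: "bij_betw (Th \<sigma>) (Tsh \<sigma>) T" by (rule Th_bij[OF s])
  let ?j = "\<lambda>\<tau>. restrict (\<lambda>v. \<tau> (Th \<sigma> v)) (Tsh \<sigma>)"
  let ?i = "\<lambda>\<tau>'. restrict (\<lambda>w. \<tau>' (inv_into (Tsh \<sigma>) (Th \<sigma>) w)) T"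
  let ?LT = "{\<tau> \<in> T \<rightarrow>\<^sub>E (UNIV :: 'a set). is_labelling T i \<alpha> \<tau>}"
  let ?LS = "{\<tau> \<in> Tsh \<sigma> \<rightarrow>\<^sub>E (UNIV :: 'a set). is_labelling (Tsh \<sigma>) i \<alpha> \<tau>}"
  have ij: "?i (?j a) = a" if "a \<in> T \<rightarrow>\<^sub>E UNIV" for a :: "nat list \<Rightarrow> 'a"
  proof (rule ext)
    fix w show "?i (?j a) w = a w"
    proof (cases "w \<in> T")
      case True
      have "inv_into (Tsh \<sigma>) (Th \<sigma>) w \<in> Tsh \<sigma>" "Th \<sigma> (inv_into (Tsh \<sigma>) (Th \<sigma>) w) = w"
        using bij_betw_inv_into_right[OF bij True] inv_into_into[of w "Th \<sigma>" "Tsh \<sigma>"] bij_betw_imp_surj_on[OF bij] True by auto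
      thus ?thesis using True by simp
    next
      case False thus ?thesis using that by (auto simp: PiE_def extensional_def)
    qed
  qed
  have ji: "?j (?i b) = b" if "b \<in> Tsh \<sigma> \<rightarrow>\<^sub>E UNIV" for b :: "nat list \<Rightarrow> 'a"
  proof (rule ext)
    fix v show "?j (?i b) v = b v"
    proof (cases "v \<in> Tsh \<sigma>")
      case True
      have "Th \<sigma> v \<in> T" "inv_into (Tsh \<sigma>) (Th \<sigma>) (Th \<sigma> v) = v"
        using bij_betw_inv_into_left[OF bij True] bij_betw_apply[OF bij True] by auto
      thus ?thesis using True by simp
    next
      case False thus ?thesis using that by (auto simp: PiE_def extensional_def)
    qed
  qed
  have "(\<Sum>\<tau>\<in>?LT. \<Prod>v\<in>internal_vertices (Tsh \<sigma>). Hc (\<tau> (Th \<sigma> v)) (child_type_count (Tsh \<sigma>) (\<lambda>v. \<tau> (Th \<sigma> v)) v))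
      = (\<Sum>\<tau>'\<in>?LS. \<Prod>v\<in>internal_vertices (Tsh \<sigma>). Hc (\<tau>' v) (child_type_count (Tsh \<sigma>) \<tau>' v))"
  proof (rule sum.reindex_bij_witness[of _ ?i ?j])
    fix a assume a: "a \<in> ?LT"
    show "?i (?j a) = a" using ij a by blast
    show "?j a \<in> ?LS" using a labelling_iff[OF s, of i \<alpha> a] by simp
    show "(\<Prod>v\<in>internal_vertices (Tsh \<sigma>). Hc (?j a v) (child_type_count (Tsh \<sigma>) (?j a) v)) =
          (\<Prod>v\<in>internal_vertices (Tsh \<sigma>). Hc (a (Th \<sigma> v)) (child_type_count (Tsh \<sigma>) (\<lambda>v. a (Th \<sigma> v)) v))"
    proof (rule prod.cong[OF refl])
      fix v assume v: "v \<in> internal_vertices (Tsh \<sigma>)"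
      hence vS: "v \<in> Tsh \<sigma>" by (simp add: internal_vertices_def)
      have "child_type_count (Tsh \<sigma>) (?j a) v = child_type_count (Tsh \<sigma>) (\<lambda>v. a (Th \<sigma> v)) v"
        unfolding child_type_count_def by (rule ext) (rule arg_cong[where f=card], auto)
      thus "Hc (?j a v) (child_type_count (Tsh \<sigma>) (?j a) v) = Hc (a (Th \<sigma> v)) (child_type_count (Tsh \<sigma>) (\<lambda>v. a (Th \<sigma> v)) v)"
        using vS by simp
    qed
  next
    fix b assume b: "b \<in> ?LS"
    show "?j (?i b) = b" using ji b by blast
    have "?i b \<in> T \<rightarrow>\<^sub>E UNIV" by simp
    moreover have "is_labelling T i \<alpha> (?i b)"
      using labelling_iff[OF s, of i \<alpha> "?i b"] ji b by simp
    ultimately show "?i b \<in> ?LT" by simp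
  qed
  thus ?thesis unfolding E_weight_def by simp
qed

lemma finite_Par: "finite Par"
proof (rule finite_subset[OF _ finT])
  show "Par \<subseteq> T" using Par_props(2) by blast
qed

lemma prod_split:
  assumes s: "\<sigma> permutes P"
  shows "(\<Prod>v\<in>internal_vertices (Tsh \<sigma>). Hc (\<tau> (Th \<sigma> v)) (child_type_count (Tsh \<sigma>) (\<lambda>v. \<tau> (Th \<sigma> v)) v)) =
    (\<Prod>w\<in>internal_vertices T - Par. Hc (\<tau> w) (child_type_count T \<tau> w)) *
    (\<Prod>v\<in>Par. Hc (\<tau> v) (child_type_count (Tsh \<sigma>) (\<lambda>v. \<tau> (Th \<sigma> v)) v))"
proof -
  have bij: "bij_betw (Th \<sigma>) (Tsh \<sigma>) T" by (rule Th_bij[OF s])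
  have finS: "finite (Tsh \<sigma>)" using bij finT bij_betw_finite by blast
  have finI: "finite (internal_vertices (Tsh \<sigma>))"
    by (rule finite_subset[OF _ finS]) (auto simp: internal_vertices_def)
  have sub: "Par \<subseteq> internal_vertices (Tsh \<sigma>)" using Par_int[OF s] by blast
  have "(\<Prod>v\<in>internal_vertices (Tsh \<sigma>). Hc (\<tau> (Th \<sigma> v)) (child_type_count (Tsh \<sigma>) (\<lambda>v. \<tau> (Th \<sigma> v)) v)) =
     (\<Prod>v\<in>internal_vertices (Tsh \<sigma>) - Par. Hc (\<tau> (Th \<sigma> v)) (child_type_count (Tsh \<sigma>) (\<lambda>v. \<tau> (Th \<sigma> v)) v)) *
     (\<Prod>v\<in>Par. Hc (\<tau> (Th \<sigma> v)) (child_type_count (Tsh \<sigma>) (\<lambda>v. \<tau> (Th \<sigma> v)) v))"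
    using prod.subset_diff[OF sub finI] by simp
  also have "(\<Prod>v\<in>Par. Hc (\<tau> (Th \<sigma> v)) (child_type_count (Tsh \<sigma>) (\<lambda>v. \<tau> (Th \<sigma> v)) v)) =
             (\<Prod>v\<in>Par. Hc (\<tau> v) (child_type_count (Tsh \<sigma>) (\<lambda>v. \<tau> (Th \<sigma> v)) v))"
    by (rule prod.cong[OF refl]) (simp add: Th_nonext Par_props)
  also have "(\<Prod>v\<in>internal_vertices (Tsh \<sigma>) - Par. Hc (\<tau> (Th \<sigma> v)) (child_type_count (Tsh \<sigma>) (\<lambda>v. \<tau> (Th \<sigma> v)) v)) =
             (\<Prod>v\<in>internal_vertices (Tsh \<sigma>) - Par. Hc (\<tau> (Th \<sigma> v)) (child_type_count T \<tau> (Th \<sigma> v)))"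
  proof (rule prod.cong[OF refl])
    fix v assume v: "v \<in> internal_vertices (Tsh \<sigma>) - Par"
    hence vS: "v \<in> Tsh \<sigma>" and np: "\<And>c. v @ [c] \<notin> P" by (auto simp: internal_vertices_def Par_def)
    show "Hc (\<tau> (Th \<sigma> v)) (child_type_count (Tsh \<sigma>) (\<lambda>v. \<tau> (Th \<sigma> v)) v) = Hc (\<tau> (Th \<sigma> v)) (child_type_count T \<tau> (Th \<sigma> v))"
      by (simp only: ctc_eq[OF s vS np])
  qed
  also have "\<dots> = (\<Prod>w\<in>internal_vertices T - Par. Hc (\<tau> w) (child_type_count T \<tau> w))"
  proof (rule prod.reindex_bij_betw)
    show "bij_betw (Th \<sigma>) (internal_vertices (Tsh \<sigma>) - Par) (internal_vertices T - Par)"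
    proof (rule bij_betw_imageI)
      show "inj_on (Th \<sigma>) (internal_vertices (Tsh \<sigma>) - Par)"
        using Th_inj[OF s] by (rule inj_on_subset) (auto simp: internal_vertices_def)
      have notPar: "Th \<sigma> v \<in> Par \<longleftrightarrow> v \<in> Par" if v: "v \<in> Tsh \<sigma>" for v
      proof
        assume "v \<in> Par" thus "Th \<sigma> v \<in> Par" using Th_nonext Par_props by simp
      next
        assume a: "Th \<sigma> v \<in> Par"
        show "v \<in> Par"
        proof (cases "isext v")
          case True
          then obtain q u where qu: "q \<in> P" "v = q @ u" by (auto simp: isext_def)
          have "Th \<sigma> v = \<sigma> q @ u" using qu Th_ext by simp
          moreover have "\<sigma> q \<in> P" using permutes_in_image[OF s] qu by simp
          ultimately have "isext (Th \<sigma> v)" using isext_app by simp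
          thus ?thesis using Par_props(1)[OF a] by simp
        next
          case False thus ?thesis using a Th_nonext by simp
        qed
      qed
      show "Th \<sigma> ` (internal_vertices (Tsh \<sigma>) - Par) = internal_vertices T - Par"
      proof
        show "Th \<sigma> ` (internal_vertices (Tsh \<sigma>) - Par) \<subseteq> internal_vertices T - Par"
        proof (rule image_subsetI)
          fix v assume v: "v \<in> internal_vertices (Tsh \<sigma>) - Par"
          hence vS: "v \<in> Tsh \<sigma>" by (simp add: internal_vertices_def)
          have "Th \<sigma> v \<in> internal_vertices T" using int_iff[OF s vS] v by blast
          moreover have "Th \<sigma> v \<notin> Par" using notPar[OF vS] v by blast
          ultimately show "Th \<sigma> v \<in> internal_vertices T - Par" by blast
        qed
        show "internal_vertices T - Par \<subseteq> Th \<sigma> ` (internal_vertices (Tsh \<sigma>) - Par)"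
        proof
          fix w assume w: "w \<in> internal_vertices T - Par"
          hence "w \<in> T" by (auto simp: internal_vertices_def)
          then obtain v where v: "v \<in> Tsh \<sigma>" "w = Th \<sigma> v" using Th_surj[OF s] by blast
          have "v \<in> internal_vertices (Tsh \<sigma>)" using int_iff[OF s v(1)] v w by simp
          moreover have "v \<notin> Par" using notPar[OF v(1)] v w by simp
          ultimately show "w \<in> Th \<sigma> ` (internal_vertices (Tsh \<sigma>) - Par)" using v by blast
        qed
      qed
    qed
  qed
  finally show ?thesis .
qed

end

context shuf
begin

lemma ctc_Par:
  assumes s: "\<sigma> permutes P" and v: "v \<in> Par" and c0: "{c. v @ [c] \<in> T \<and> v @ [c] \<notin> P} = {c0}"
  shows "child_type_count (Tsh \<sigma>) (\<lambda>w. \<tau> (Th \<sigma> w)) v =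
    (cnt {r\<in>P. \<exists>c. r = v @ [c]} (\<lambda>r. \<tau> (\<sigma> r)))(\<tau> (v @ [c0]) := Suc (cnt {r\<in>P. \<exists>c. r = v @ [c]} (\<lambda>r. \<tau> (\<sigma> r)) (\<tau> (v @ [c0]))))"
    (is "?L = ?R")
proof
  fix j
  let ?C = "{r\<in>P. \<exists>c. r = v @ [c]}"
  let ?A = "{c. v @ [c] \<in> P \<and> \<tau> (\<sigma> (v @ [c])) = j}"
  have vS: "v \<in> Tsh \<sigma>" using Par_props[OF v] Ou_sub by blast
  have Thv: "Th \<sigma> v = v" using Par_props[OF v] Th_nonext by blast
  have c0P: "v @ [c0] \<notin> P" "v @ [c0] \<in> T" using c0 by auto
  have split: "{c. v @ [c] \<in> Tsh \<sigma> \<and> \<tau> (Th \<sigma> (v @ [c])) = j} = ?A \<union> {c. c = c0 \<and> \<tau> (v @ [c0]) = j}"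
  proof (rule set_eqI)
    fix c
    show "c \<in> {c. v @ [c] \<in> Tsh \<sigma> \<and> \<tau> (Th \<sigma> (v @ [c])) = j} \<longleftrightarrow> c \<in> ?A \<union> {c. c = c0 \<and> \<tau> (v @ [c0]) = j}"
    proof (cases "v @ [c] \<in> P")
      case True
      have "v @ [c] \<in> Tsh \<sigma>" by (rule P_Tsh[OF s True])
      moreover have "Th \<sigma> (v @ [c]) = \<sigma> (v @ [c])" using Th_ext[OF True, of \<sigma> "[]"] by simp
      moreover have "c \<noteq> c0" using True c0P by blast
      ultimately show ?thesis using True by simp
    next
      case False
      have ch: "Th \<sigma> (v @ [c]) = v @ [c] \<and> (v @ [c] \<in> Tsh \<sigma> \<longleftrightarrow> v @ [c] \<in> T)"
        using child[OF vS False] Thv by simp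
      have "v @ [c] \<in> T \<longleftrightarrow> c = c0" using c0 False by blast
      thus ?thesis using ch False by auto
    qed
  qed
  have disj: "?A \<inter> {c. c = c0 \<and> \<tau> (v @ [c0]) = j} = {}" using c0P by blast
  have finA: "finite ?A"
  proof -
    have "(\<lambda>c. v @ [c]) ` ?A \<subseteq> T" using PT by blast
    hence "finite ((\<lambda>c. v @ [c]) ` ?A)" using finT finite_subset by blast
    thus ?thesis by (rule finite_imageD) (simp add: inj_on_def)
  qed
  have cA: "card ?A = cnt ?C (\<lambda>r. \<tau> (\<sigma> r)) j"
  proof -
    have e: "(\<lambda>c. v @ [c]) ` ?A = {r \<in> ?C. \<tau> (\<sigma> r) = j}" by blast
    have i: "inj_on (\<lambda>c. v @ [c]) ?A" by (simp add: inj_on_def)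
    show ?thesis unfolding cnt_def using card_image[OF i] unfolding e by simp
  qed
  have "?L j = card (?A \<union> {c. c = c0 \<and> \<tau> (v @ [c0]) = j})"
    unfolding child_type_count_def split ..
  also have "\<dots> = card ?A + card {c. c = c0 \<and> \<tau> (v @ [c0]) = j}"
    by (rule card_Un_disjoint[OF finA _ disj]) simp
  also have "card {c. c = c0 \<and> \<tau> (v @ [c0]) = j} = (if \<tau> (v @ [c0]) = j then 1 else 0)" by simp
  finally show "?L j = ?R j" using cA by simp
qed

definition Psi :: "(nat list \<Rightarrow> nat list set) \<Rightarrow> nat list set" where
  "Psi h = Ou \<union> (\<Union>q\<in>P. (\<lambda>w. q @ w) ` h q)"

lemma Tsh_Psi: "Tsh \<sigma> = Psi (restrict (\<lambda>q. subtree_at T (\<sigma> q)) P)"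
  unfolding Tsh_def Psi_def by auto

lemma Psi_mem: "q \<in> P \<Longrightarrow> (q @ x \<in> Psi h \<longleftrightarrow> x \<in> h q)"
proof
  assume q: "q \<in> P" and m: "q @ x \<in> Psi h"
  have "q @ x \<notin> Ou" using q by (auto simp: Ou_def isext_def)
  then obtain q' w where q': "q' \<in> P" "w \<in> h q'" "q @ x = q' @ w"
    using m by (auto simp: Psi_def)
  thus "x \<in> h q" using same_pre[OF q q'(1) q'(3)] by simp
next
  assume "q \<in> P" "x \<in> h q" thus "q @ x \<in> Psi h" by (auto simp: Psi_def)
qed

lemma Psi_inj: "inj_on Psi (P \<rightarrow>\<^sub>E UNIV)"
proof (rule inj_onI)
  fix h1 h2 assume h: "h1 \<in> P \<rightarrow>\<^sub>E UNIV" "h2 \<in> P \<rightarrow>\<^sub>E UNIV" "Psi h1 = Psi h2"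
  show "h1 = h2"
  proof (rule ext)
    fix q show "h1 q = h2 q"
    proof (cases "q \<in> P")
      case True
      show ?thesis using Psi_mem[OF True, of _ h1] Psi_mem[OF True, of _ h2] h(3) by blast
    next
      case False thus ?thesis using h by (auto simp: PiE_def extensional_def)
    qed
  qed
qed

lemma shuffle_eq:
  "{T'. \<exists>\<sigma>. bij_betw \<sigma> P P \<and> T' = {w \<in> T. \<not> (\<exists>q\<in>P. (\<exists>u. w = q @ u))} \<union> (\<Union>q\<in>P. (\<lambda>w. q @ w) ` subtree_at T (\<sigma> q))}
   = Tsh ` {\<sigma>. \<sigma> permutes P}"
proof
  have O: "{w \<in> T. \<not> (\<exists>q\<in>P. (\<exists>u. w = q @ u))} = Ou" by (simp add: Ou_def isext_def)
  show "{T'. \<exists>\<sigma>. bij_betw \<sigma> P P \<and> T' = {w \<in> T. \<not> (\<exists>q\<in>P. (\<exists>u. w = q @ u))} \<union> (\<Union>q\<in>P. (\<lambda>w. q @ w) ` subtree_at T (\<sigma> q))}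
   \<subseteq> Tsh ` {\<sigma>. \<sigma> permutes P}"
  proof
    fix T' assume "T' \<in> {T'. \<exists>\<sigma>. bij_betw \<sigma> P P \<and> T' = {w \<in> T. \<not> (\<exists>q\<in>P. (\<exists>u. w = q @ u))} \<union> (\<Union>q\<in>P. (\<lambda>w. q @ w) ` subtree_at T (\<sigma> q))}"
    then obtain \<sigma> where \<sigma>: "bij_betw \<sigma> P P" "T' = Ou \<union> (\<Union>q\<in>P. (\<lambda>w. q @ w) ` subtree_at T (\<sigma> q))"
      unfolding O by blast
    define \<sigma>' where "\<sigma>' x = (if x \<in> P then \<sigma> x else x)" for x
    have "bij_betw \<sigma>' P P" using \<sigma>(1) by (rule bij_betw_cong[THEN iffD1, rotated]) (simp add: \<sigma>'_def)
    hence perm: "\<sigma>' permutes P" by (rule bij_imp_permutes) (simp add: \<sigma>'_def)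
    have "Tsh \<sigma>' = T'" unfolding \<sigma>(2) Tsh_def by (auto simp: \<sigma>'_def)
    thus "T' \<in> Tsh ` {\<sigma>. \<sigma> permutes P}" using perm by blast
  qed
  show "Tsh ` {\<sigma>. \<sigma> permutes P} \<subseteq> {T'. \<exists>\<sigma>. bij_betw \<sigma> P P \<and> T' = {w \<in> T. \<not> (\<exists>q\<in>P. (\<exists>u. w = q @ u))} \<union> (\<Union>q\<in>P. (\<lambda>w. q @ w) ` subtree_at T (\<sigma> q))}"
    unfolding O Tsh_def using permutes_imp_bij by blast
qed

end

definition vv :: "nat list \<Rightarrow> nat list \<Rightarrow> nat \<Rightarrow> nat list" where
  "vv v0 cs i = v0 @ take i cs"

definition Cc :: "nat \<Rightarrow> nat list \<Rightarrow> nat list \<Rightarrow> nat \<Rightarrow> nat list set" where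
  "Cc d v0 cs i = (\<lambda>c. vv v0 cs i @ [c]) ` {c. c < d \<and> c \<noteq> cs ! i}"

lemma tree_prefix: "dcatalan_tree d T \<Longrightarrow> w @ u \<in> T \<Longrightarrow> w \<in> T"
proof (induction u rule: rev_induct)
  case Nil thus ?case by simp
next
  case (snoc c u)
  hence "(w @ u) @ [c] \<in> T" by simp
  hence "w @ u \<in> T" using snoc.prems(1) unfolding dcatalan_tree_def by blast
  thus ?case using snoc by blast
qed

locale pathsetup =
  fixes d :: nat and T :: "nat list set" and v0 cs :: "nat list" and p :: nat
  assumes dT: "dcatalan_tree d T" and d2: "d \<ge> 2" and len: "length cs = p" and mem: "v0 @ cs \<in> T"
begin

abbreviation "v \<equiv> vv v0 cs"
abbreviation "C \<equiv> Cc d v0 cs"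
abbreviation "PP \<equiv> sibling_positions d v0 cs"

lemma v_in_T: "i \<le> p \<Longrightarrow> v i \<in> T"
proof -
  assume "i \<le> p"
  have "v0 @ cs = v i @ drop i cs" by (simp add: vv_def)
  thus "v i \<in> T" using mem tree_prefix[OF dT] by metis
qed

lemma v_Suc: "i < p \<Longrightarrow> v (Suc i) = v i @ [cs ! i]"
  using len by (simp add: vv_def take_Suc_conv_app_nth)

lemma v_len: "i \<le> p \<Longrightarrow> length (v i) = length v0 + i"
  using len by (simp add: vv_def)

lemma children: "i < p \<Longrightarrow> cs ! i < d \<and> (\<forall>c. v i @ [c] \<in> T \<longleftrightarrow> c < d)"
proof -
  assume i: "i < p"
  have "v i \<in> T" using v_in_T i by simp
  moreover have "v i @ [cs ! i] \<in> T" using v_in_T[of "Suc i"] v_Suc[OF i] i by simp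
  ultimately have "\<forall>c. v i @ [c] \<in> T \<longleftrightarrow> c < d" using dT unfolding dcatalan_tree_def by blast
  thus ?thesis using \<open>v i @ [cs ! i] \<in> T\<close> by blast
qed

lemma PP_eq: "PP = (\<Union>i<p. C i)"
  unfolding sibling_positions_def Cc_def vv_def using len by auto

lemma C_len: "i < p \<Longrightarrow> r \<in> C i \<Longrightarrow> length r = length v0 + i + 1"
  using v_len[of i] by (auto simp: Cc_def)

lemma PP_form: "r \<in> PP \<longleftrightarrow> (\<exists>i c. i < p \<and> c < d \<and> c \<noteq> cs ! i \<and> r = v i @ [c])"
  unfolding PP_eq Cc_def by auto

lemma take_neq:
  assumes "j < i" "i \<le> p" "take i cs @ [c] = take j cs @ (c' # z)"
  shows "c' = cs ! j"
proof -
  have li: "length (take i cs) = i" and lj: "length (take j cs) = j" using assms len by auto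
  have "(take i cs @ [c]) ! j = take i cs ! j" using li assms(1) by (simp add: nth_append)
  also have "\<dots> = cs ! j" using assms(1) by simp
  finally have 1: "(take i cs @ [c]) ! j = cs ! j" .
  have "(take j cs @ (c' # z)) ! j = c'" using lj by (simp add: nth_append)
  note 2 = this
  show ?thesis using 1 2 assms(3) by simp
qed

lemma anti_PP: "q \<in> PP \<Longrightarrow> q' \<in> PP \<Longrightarrow> q = q' @ z \<Longrightarrow> z = []"
proof -
  assume q: "q \<in> PP" and q': "q' \<in> PP" and e: "q = q' @ z"
  obtain i c where ic: "i < p" "c < d" "c \<noteq> cs ! i" "q = v i @ [c]" using q PP_form by blast
  obtain j c' where jc: "j < p" "c' < d" "c' \<noteq> cs ! j" "q' = v j @ [c']" using q' PP_form by blast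
  have "length (v i @ [c]) = length (v j @ [c']) + length z" using e ic(4) jc(4) by simp
  hence l: "i + 1 = j + 1 + length z" using ic(1) jc(1) v_len[of i] v_len[of j] by simp
  have e2: "take i cs @ [c] = take j cs @ (c' # z)" using e ic(4) jc(4) by (simp add: vv_def)
  show "z = []"
  proof (cases "j < i")
    case True
    hence "c' = cs ! j" using take_neq[OF True _ e2] ic(1) by simp
    thus ?thesis using jc(3) by simp
  next
    case False thus ?thesis using l by simp
  qed
qed

lemma nil_PP: "[] \<notin> PP"
  using PP_form by (auto simp: vv_def)

lemma PP_T: "PP \<subseteq> T"
  using PP_form children by auto

lemma shuf: "shuf T PP"
proof
  show "finite T" using dT by (simp add: dcatalan_tree_def)
  show "[] \<in> T" using dT by (simp add: dcatalan_tree_def)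
  show "PP \<subseteq> T" by (rule PP_T)
  show "\<And>q q' z. q \<in> PP \<Longrightarrow> q' \<in> PP \<Longrightarrow> q = q' @ z \<Longrightarrow> z = []" by (rule anti_PP)
  show "[] \<notin> PP" by (rule nil_PP)
  show "\<And>v c. v @ [c] \<in> T \<Longrightarrow> v \<in> T" using dT unfolding dcatalan_tree_def by blast
qed

lemma Par_eq: "shuf.Par PP = v ` {..<p}"
proof
  show "shuf.Par PP \<subseteq> v ` {..<p}"
  proof
    fix w assume "w \<in> shuf.Par PP"
    then obtain c where "w @ [c] \<in> PP" by (auto simp: shuf.Par_def[OF shuf])
    then obtain i c' where "i < p" "w @ [c] = v i @ [c']" using PP_form by blast
    thus "w \<in> v ` {..<p}" by auto
  qed
  show "v ` {..<p} \<subseteq> shuf.Par PP"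
  proof
    fix w assume "w \<in> v ` {..<p}"
    then obtain i where i: "i < p" "w = v i" by auto
    let ?c = "if cs ! i = 0 then 1 else 0"
    have "?c < d" "?c \<noteq> cs ! i" using d2 by auto
    hence "w @ [?c] \<in> PP" using PP_form i by blast
    thus "w \<in> shuf.Par PP" by (auto simp: shuf.Par_def[OF shuf])
  qed
qed

lemma nonP_child: "i < p \<Longrightarrow> {c. v i @ [c] \<in> T \<and> v i @ [c] \<notin> PP} = {cs ! i}"
proof -
  assume i: "i < p"
  have notin: "v i @ [cs ! i] \<notin> PP"
  proof
    assume "v i @ [cs ! i] \<in> PP"
    then obtain j c' where jc: "j < p" "c' \<noteq> cs ! j" "v i @ [cs ! i] = v j @ [c']" using PP_form by blast
    have "i = j" using jc(3) v_len[of i] v_len[of j] i jc(1) by (metis add_left_cancel length_append_singleton less_imp_le_nat nat.inject)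
    thus False using jc by simp
  qed
  show ?thesis
  proof (rule set_eqI)
    fix c
    show "c \<in> {c. v i @ [c] \<in> T \<and> v i @ [c] \<notin> PP} \<longleftrightarrow> c \<in> {cs ! i}"
    proof
      assume "c \<in> {c. v i @ [c] \<in> T \<and> v i @ [c] \<notin> PP}"
      hence "c < d" "v i @ [c] \<notin> PP" using children[OF i] by auto
      thus "c \<in> {cs ! i}" using PP_form i by auto
    next
      assume "c \<in> {cs ! i}" thus "c \<in> {c. v i @ [c] \<in> T \<and> v i @ [c] \<notin> PP}" using children[OF i] notin by auto
    qed
  qed
qed

lemma C_child: "i < p \<Longrightarrow> {r\<in>PP. \<exists>c. r = v i @ [c]} = C i"
proof
  assume i: "i < p"
  show "{r\<in>PP. \<exists>c. r = v i @ [c]} \<subseteq> C i"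
  proof
    fix r assume "r \<in> {r\<in>PP. \<exists>c. r = v i @ [c]}"
    then obtain c j c' where r: "r = v i @ [c]" "j < p" "c' < d" "c' \<noteq> cs ! j" "r = v j @ [c']" using PP_form by blast
    have "i = j" using r v_len[of i] v_len[of j] i by (metis add_left_cancel length_append_singleton less_imp_le_nat nat.inject)
    thus "r \<in> C i" using r by (auto simp: Cc_def)
  qed
  show "C i \<subseteq> {r\<in>PP. \<exists>c. r = v i @ [c]}" using PP_eq i by (auto simp: Cc_def)
qed

lemma card_C: "i < p \<Longrightarrow> card (C i) = d - 1"
proof -
  assume i: "i < p"
  have "card (C i) = card {c. c < d \<and> c \<noteq> cs ! i}"
    unfolding Cc_def by (rule card_image) (simp add: inj_on_def)
  also have "{c. c < d \<and> c \<noteq> cs ! i} = {..<d} - {cs ! i}" by auto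
  also have "card \<dots> = d - 1" using children[OF i] by simp
  finally show ?thesis .
qed

lemma finite_C: "finite (C i)"
  unfolding Cc_def by simp

lemma idx_C: "i < p \<Longrightarrow> r \<in> C i \<Longrightarrow> length r - length v0 - 1 = i"
  using C_len by simp

lemma v_inj: "i \<le> p \<Longrightarrow> j \<le> p \<Longrightarrow> v i = v j \<Longrightarrow> i = j"
  using v_len by (metis add_left_cancel)

end

context pathsetup
begin

interpretation S: shuf T PP by (rule shuf)

definition Rw :: "('n \<Rightarrow> ('n \<Rightarrow> nat) \<Rightarrow> complex) \<Rightarrow> (nat list \<Rightarrow> 'n) \<Rightarrow> complex" where
  "Rw Hc \<tau> = (\<Prod>w\<in>internal_vertices T - S.Par. Hc (\<tau> w) (child_type_count T \<tau> w))"

lemma v_Par: "n < p \<Longrightarrow> v n \<in> S.Par"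
  using Par_eq by auto

lemma Par_prod:
  assumes s: "\<sigma> permutes PP"
  shows "(\<Prod>w\<in>S.Par. Hc (\<tau> w) (child_type_count (S.Tsh \<sigma>) (\<lambda>w. \<tau> (S.Th \<sigma> w)) w)) =
         Qw Hc p C (\<lambda>n. \<tau> (v n)) (restrict (\<tau> \<circ> \<sigma>) PP)"
proof -
  have inj: "inj_on v {..<p}" using v_inj by (auto simp: inj_on_def)
  have "(\<Prod>w\<in>S.Par. Hc (\<tau> w) (child_type_count (S.Tsh \<sigma>) (\<lambda>w. \<tau> (S.Th \<sigma> w)) w)) =
        (\<Prod>n<p. Hc (\<tau> (v n)) (child_type_count (S.Tsh \<sigma>) (\<lambda>w. \<tau> (S.Th \<sigma> w)) (v n)))"
    unfolding Par_eq by (rule prod.reindex[OF inj, unfolded comp_def])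
  also have "\<dots> = Qw Hc p C (\<lambda>n. \<tau> (v n)) (restrict (\<tau> \<circ> \<sigma>) PP)"
    unfolding Qw_def
  proof (rule prod.cong[OF refl])
    fix n assume n: "n \<in> {..<p}"
    hence n': "n < p" by simp
    have "child_type_count (S.Tsh \<sigma>) (\<lambda>w. \<tau> (S.Th \<sigma> w)) (v n) =
      (cnt {r\<in>PP. \<exists>c. r = v n @ [c]} (\<lambda>r. \<tau> (\<sigma> r)))(\<tau> (v n @ [cs ! n]) := Suc (cnt {r\<in>PP. \<exists>c. r = v n @ [c]} (\<lambda>r. \<tau> (\<sigma> r)) (\<tau> (v n @ [cs ! n]))))"
      by (rule S.ctc_Par[OF s v_Par[OF n'] nonP_child[OF n']])
    also have "{r\<in>PP. \<exists>c. r = v n @ [c]} = C n" by (rule C_child[OF n'])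
    also have "v n @ [cs ! n] = v (Suc n)" using v_Suc[OF n'] by simp
    also have "cnt (C n) (\<lambda>r. \<tau> (\<sigma> r)) = cnt (C n) (restrict (\<tau> \<circ> \<sigma>) PP)"
    proof -
      have "C n \<subseteq> PP" using PP_eq n' by blast
      from cnt_restrict_sub[OF this, of "\<tau> \<circ> \<sigma>"] show ?thesis by (simp add: comp_def)
    qed
    finally show "Hc (\<tau> (v n)) (child_type_count (S.Tsh \<sigma>) (\<lambda>w. \<tau> (S.Th \<sigma> w)) (v n)) =
      Hc (\<tau> (v n)) ((cnt (C n) (restrict (\<tau> \<circ> \<sigma>) PP))(\<tau> (v (Suc n)) := Suc (cnt (C n) (restrict (\<tau> \<circ> \<sigma>) PP) (\<tau> (v (Suc n))))))"
      by (rule arg_cong[where f="Hc (\<tau> (v n))"])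
  qed
  finally show ?thesis .
qed

lemma E_path:
  assumes s: "\<sigma> permutes PP"
  shows "E_weight Hc i0 \<alpha> (S.Tsh \<sigma>) = (\<Sum>\<tau>\<in>{\<tau> \<in> T \<rightarrow>\<^sub>E UNIV. is_labelling T i0 \<alpha> \<tau>}.
            Rw Hc \<tau> * Qw Hc p C (\<lambda>n. \<tau> (v n)) (restrict (\<tau> \<circ> \<sigma>) PP))"
  unfolding S.E_Tsh[OF s] S.prod_split[OF s] Par_prod[OF s] Rw_def ..

lemma sum_sigma:
  "(\<Sum>\<sigma>\<in>{\<sigma>. \<sigma> permutes PP}. E_weight Hc i0 \<alpha> (S.Tsh \<sigma>)) =
   (\<Sum>\<tau>\<in>{\<tau> \<in> T \<rightarrow>\<^sub>E UNIV. is_labelling T i0 \<alpha> \<tau>}.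
      Rw Hc \<tau> * (of_nat (card (Stab PP \<tau>)) * (\<Sum>h\<in>Img PP \<tau>. Qw Hc p C (\<lambda>n. \<tau> (v n)) h)))"
proof -
  have finPP: "finite PP" using PP_T S.finT finite_subset by blast
  have "(\<Sum>\<sigma>\<in>{\<sigma>. \<sigma> permutes PP}. E_weight Hc i0 \<alpha> (S.Tsh \<sigma>)) =
        (\<Sum>\<sigma>\<in>{\<sigma>. \<sigma> permutes PP}. \<Sum>\<tau>\<in>{\<tau> \<in> T \<rightarrow>\<^sub>E UNIV. is_labelling T i0 \<alpha> \<tau>}.
            Rw Hc \<tau> * Qw Hc p C (\<lambda>n. \<tau> (v n)) (restrict (\<tau> \<circ> \<sigma>) PP))"
    by (rule sum.cong[OF refl]) (simp add: E_path)
  also have "\<dots> = (\<Sum>\<tau>\<in>{\<tau> \<in> T \<rightarrow>\<^sub>E UNIV. is_labelling T i0 \<alpha> \<tau>}. \<Sum>\<sigma>\<in>{\<sigma>. \<sigma> permutes PP}.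
            Rw Hc \<tau> * Qw Hc p C (\<lambda>n. \<tau> (v n)) (restrict (\<tau> \<circ> \<sigma>) PP))"
    by (rule sum.swap)
  also have "\<dots> = (\<Sum>\<tau>\<in>{\<tau> \<in> T \<rightarrow>\<^sub>E UNIV. is_labelling T i0 \<alpha> \<tau>}.
      Rw Hc \<tau> * (of_nat (card (Stab PP \<tau>)) * (\<Sum>h\<in>Img PP \<tau>. Qw Hc p C (\<lambda>n. \<tau> (v n)) h)))"
  proof (rule sum.cong[OF refl])
    fix \<tau> :: "nat list \<Rightarrow> 'a"
    have "(\<Sum>\<sigma>\<in>{\<sigma>. \<sigma> permutes PP}. Rw Hc \<tau> * Qw Hc p C (\<lambda>n. \<tau> (v n)) (restrict (\<tau> \<circ> \<sigma>) PP)) =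
          Rw Hc \<tau> * (\<Sum>\<sigma>\<in>{\<sigma>. \<sigma> permutes PP}. Qw Hc p C (\<lambda>n. \<tau> (v n)) (restrict (\<tau> \<circ> \<sigma>) PP))"
      by (simp add: sum_distrib_left)
    also have "(\<Sum>\<sigma>\<in>{\<sigma>. \<sigma> permutes PP}. Qw Hc p C (\<lambda>n. \<tau> (v n)) (restrict (\<tau> \<circ> \<sigma>) PP)) =
               of_nat (card (Stab PP \<tau>)) * (\<Sum>h\<in>Img PP \<tau>. Qw Hc p C (\<lambda>n. \<tau> (v n)) h)"
      by (rule fiber_sum[OF finPP])
    finally show "(\<Sum>\<sigma>\<in>{\<sigma>. \<sigma> permutes PP}. Rw Hc \<tau> * Qw Hc p C (\<lambda>n. \<tau> (v n)) (restrict (\<tau> \<circ> \<sigma>) PP)) =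
      Rw Hc \<tau> * (of_nat (card (Stab PP \<tau>)) * (\<Sum>h\<in>Img PP \<tau>. Qw Hc p C (\<lambda>n. \<tau> (v n)) h))" .
  qed
  finally show ?thesis .
qed

end

context pathsetup
begin

interpretation S: shuf T PP by (rule shuf)

definition mid :: "nat list set" where "mid = v ` {n. 0 < n \<and> n < p}"
definition merge :: "(nat list \<Rightarrow> 'a) \<Rightarrow> (nat \<Rightarrow> 'a) \<Rightarrow> nat list \<Rightarrow> 'a" where
  "merge \<tau> u = (\<lambda>w. if w \<in> mid then u (length w - length v0) else \<tau> w)"
definition reset :: "'a \<Rightarrow> (nat list \<Rightarrow> 'a) \<Rightarrow> nat list \<Rightarrow> 'a" where
  "reset a0 \<tau> = (\<lambda>w. if w \<in> mid then a0 else \<tau> w)"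
definition pathof :: "(nat list \<Rightarrow> 'a) \<Rightarrow> nat \<Rightarrow> 'a" where
  "pathof \<tau> = restrict (\<lambda>n. \<tau> (v n)) {..p}"

lemma mid_T: "mid \<subseteq> T"
  using v_in_T by (auto simp: mid_def)

lemma mid_Par: "mid \<subseteq> S.Par"
  using v_Par by (auto simp: mid_def)

lemma mid_leaves: "w \<in> mid \<Longrightarrow> w \<notin> leaves T"
  using mid_Par S.Par_props(3) by (auto simp: leaves_def internal_vertices_def)

lemma mid_nil: "[] \<notin> mid"
  using len by (auto simp: mid_def vv_def)

lemma mid_PP: "w \<in> mid \<Longrightarrow> w \<notin> PP"
proof
  assume "w \<in> mid" "w \<in> PP"
  hence "\<not> S.isext w" using mid_Par S.Par_props(1) by blast
  moreover have "S.isext (w @ [])" using \<open>w \<in> PP\<close> by (rule S.isext_app)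
  ultimately show False by simp
qed

lemma v_mid: "n \<le> p \<Longrightarrow> v n \<in> mid \<longleftrightarrow> 0 < n \<and> n < p"
proof
  assume n: "n \<le> p" "v n \<in> mid"
  then obtain m where m: "0 < m" "m < p" "v n = v m" by (auto simp: mid_def)
  hence "n = m" using v_inj n(1) by simp
  thus "0 < n \<and> n < p" using m by simp
qed (auto simp: mid_def)

lemma mid_idx: "w \<in> mid \<Longrightarrow> w = v (length w - length v0) \<and> 0 < length w - length v0 \<and> length w - length v0 < p"
proof -
  assume "w \<in> mid"
  then obtain n where n: "0 < n" "n < p" "w = v n" by (auto simp: mid_def)
  hence "length w - length v0 = n" using v_len by simp
  thus ?thesis using n by simp
qed

lemma merge_v: "n \<le> p \<Longrightarrow> u \<in> paths p (\<tau> (v 0)) (\<tau> (v p)) \<Longrightarrow> merge \<tau> u (v n) = u n"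
proof -
  assume n: "n \<le> p" and u: "u \<in> paths p (\<tau> (v 0)) (\<tau> (v p))"
  show ?thesis
  proof (cases "v n \<in> mid")
    case True thus ?thesis using v_len[OF n] by (simp add: merge_def)
  next
    case False
    hence "n = 0 \<or> n = p" using v_mid[OF n] n by auto
    thus ?thesis using False u by (auto simp: merge_def paths_def)
  qed
qed

lemma Rw_cong:
  assumes "\<And>w. w \<notin> mid \<Longrightarrow> \<tau> w = \<tau>' w"
  shows "Rw Hc \<tau> = Rw Hc \<tau>'"
  unfolding Rw_def
proof (rule prod.cong[OF refl])
  fix w assume w: "w \<in> internal_vertices T - S.Par"
  have wm: "w \<notin> mid" using w mid_Par by blast
  have ch: "w @ [c] \<notin> mid" for c
  proof
    assume "w @ [c] \<in> mid"
    then obtain n where n: "0 < n" "n < p" "w @ [c] = v n" by (auto simp: mid_def)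
    obtain m where m: "n = Suc m" using n(1) gr0_implies_Suc by blast
    have "v n = v m @ [cs ! m]" using v_Suc[of m] m n by simp
    hence "w = v m" using n(3) by simp
    hence "w \<in> S.Par" using v_Par[of m] m n by simp
    thus False using w by simp
  qed
  have "child_type_count T \<tau> w = child_type_count T \<tau>' w"
    unfolding child_type_count_def using assms ch by simp
  thus "Hc (\<tau> w) (child_type_count T \<tau> w) = Hc (\<tau>' w) (child_type_count T \<tau>' w)"
    using assms wm by simp
qed

lemma cnt_cong: "(\<And>r. r \<in> P \<Longrightarrow> g r = g' r) \<Longrightarrow> cnt P g = cnt P g'"
  unfolding cnt_def by (intro ext arg_cong[where f=card]) auto

lemma Img_cong: "(\<And>r. r \<in> P \<Longrightarrow> g r = g' r) \<Longrightarrow> Img P g = Img P g'"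
proof -
  assume a: "\<And>r. r \<in> P \<Longrightarrow> g r = g' r"
  have e: "cnt P g = cnt P g'" by (rule cnt_cong) (rule a)
  show ?thesis unfolding Img_def e by (rule refl)
qed

lemma Stab_cong: "(\<And>r. r \<in> P \<Longrightarrow> g r = g' r) \<Longrightarrow> Stab P g = Stab P g'"
proof -
  assume a: "\<And>r. r \<in> P \<Longrightarrow> g r = g' r"
  show ?thesis unfolding Stab_def
  proof (rule Collect_cong)
    fix \<pi>
    show "(\<pi> permutes P \<and> (\<forall>r\<in>P. g (\<pi> r) = g r)) \<longleftrightarrow> (\<pi> permutes P \<and> (\<forall>r\<in>P. g' (\<pi> r) = g' r))"
    proof (cases "\<pi> permutes P")
      case True
      have "g (\<pi> r) = g r \<longleftrightarrow> g' (\<pi> r) = g' r" if r: "r \<in> P" for r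
      proof -
        have "\<pi> r \<in> P" using permutes_in_image[OF True] r by simp
        thus ?thesis using a[OF r] a[of "\<pi> r"] by simp
      qed
      thus ?thesis using True by blast
    qed simp
  qed
qed

lemma Qw_cong: "(\<And>n. n \<le> p \<Longrightarrow> u n = u' n) \<Longrightarrow> Qw Hc p C' u h = Qw Hc p C' u' h"
proof -
  assume a: "\<And>n. n \<le> p \<Longrightarrow> u n = u' n"
  show ?thesis unfolding Qw_def
  proof (rule prod.cong[OF refl])
    fix i assume "i \<in> {..<p}"
    hence "u i = u' i" "u (Suc i) = u' (Suc i)" using a by auto
    thus "Hc (u i) ((cnt (C' i) h)(u (Suc i) := Suc (cnt (C' i) h (u (Suc i))))) =
          Hc (u' i) ((cnt (C' i) h)(u' (Suc i) := Suc (cnt (C' i) h (u' (Suc i)))))" by simp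
  qed
qed

lemma labelling_cong:
  assumes "\<And>w. w \<notin> mid \<Longrightarrow> \<tau> w = \<tau>' w"
  shows "is_labelling T i0 \<alpha> \<tau> \<longleftrightarrow> is_labelling T i0 \<alpha> \<tau>'"
proof -
  have "{w \<in> leaves T. \<tau> w = j} = {w \<in> leaves T. \<tau>' w = j}" for j
  proof (rule Collect_cong)
    fix w
    show "(w \<in> leaves T \<and> \<tau> w = j) \<longleftrightarrow> (w \<in> leaves T \<and> \<tau>' w = j)"
    proof (cases "w \<in> leaves T")
      case True
      hence "w \<notin> mid" using mid_leaves by blast
      thus ?thesis using assms[of w] by simp
    qed simp
  qed
  moreover have "\<tau> [] = \<tau>' []" using assms mid_nil by blast
  ultimately show ?thesis unfolding is_labelling_def by simp
qed

lemma total_zero: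
  fixes Hc :: "'a::finite \<Rightarrow> ('a \<Rightarrow> nat) \<Rightarrow> complex"
  assumes nil: "\<forall>x. matpow (jacobian d Hc x) p = 0"
  shows "(\<Sum>\<tau>\<in>{\<tau> \<in> T \<rightarrow>\<^sub>E UNIV. is_labelling T i0 \<alpha> \<tau>}.
      Rw Hc \<tau> * (of_nat (card (Stab PP \<tau>)) * (\<Sum>h\<in>Img PP \<tau>. Qw Hc p C (\<lambda>n. \<tau> (v n)) h))) = 0"
proof -
  let ?Lab = "{\<tau> \<in> T \<rightarrow>\<^sub>E (UNIV::'a set). is_labelling T i0 \<alpha> \<tau>}"
  let ?LabZ = "{\<tau> \<in> ?Lab. \<forall>m\<in>mid. \<tau> m = i0}"
  let ?W = "\<lambda>\<tau>. Rw Hc \<tau> * (of_nat (card (Stab PP \<tau>)) * (\<Sum>h\<in>Img PP \<tau>. Qw Hc p C (\<lambda>n. \<tau> (v n)) h))"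
  let ?Sig = "Sigma ?LabZ (\<lambda>\<tau>. paths p (\<tau> (v 0)) (\<tau> (v p)))"
  have v0m: "v 0 \<notin> mid" and vpm: "v p \<notin> mid" using v_mid by auto
  have "sum ?W ?Lab = (\<Sum>(\<tau>,u)\<in>?Sig. ?W (merge \<tau> u))"
  proof (rule sum.reindex_bij_witness[where j="\<lambda>(\<tau>,u). merge \<tau> u" and i="\<lambda>\<tau>. (reset i0 \<tau>, pathof \<tau>)", symmetric])
    fix a assume a: "a \<in> ?Sig"
    then obtain \<tau> u where tu: "a = (\<tau>, u)" "\<tau> \<in> ?LabZ" "u \<in> paths p (\<tau> (v 0)) (\<tau> (v p))" by auto
    have r: "reset i0 (merge \<tau> u) = \<tau>"
      using tu(2) by (auto simp: reset_def merge_def fun_eq_iff)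
    have pa: "pathof (merge \<tau> u) = u"
    proof (rule ext)
      fix n show "pathof (merge \<tau> u) n = u n"
      proof (cases "n \<le> p")
        case True thus ?thesis using merge_v[OF True tu(3)] by (simp add: pathof_def)
      next
        case False thus ?thesis using tu(3) by (auto simp: pathof_def paths_def PiE_def extensional_def)
      qed
    qed
    show "(\<lambda>\<tau>. (reset i0 \<tau>, pathof \<tau>)) ((\<lambda>(\<tau>, u). merge \<tau> u) a) = a" using r pa tu(1) by simp
    have off: "\<And>w. w \<notin> mid \<Longrightarrow> merge \<tau> u w = \<tau> w" by (simp add: merge_def)
    have "merge \<tau> u \<in> T \<rightarrow>\<^sub>E UNIV"
      using tu(2) mid_T by (auto simp: merge_def PiE_def extensional_def)
    moreover have "is_labelling T i0 \<alpha> (merge \<tau> u)" using labelling_cong[OF off] tu(2) by simp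
    ultimately show "(\<lambda>(\<tau>, u). merge \<tau> u) a \<in> ?Lab" using tu(1) by simp
    show "?W ((\<lambda>(\<tau>, u). merge \<tau> u) a) = (case a of (\<tau>, u) \<Rightarrow> ?W (merge \<tau> u))" using tu(1) by simp
  next
    fix b assume b: "b \<in> ?Lab"
    have "merge (reset i0 b) (pathof b) = b"
    proof (rule ext)
      fix w show "merge (reset i0 b) (pathof b) w = b w"
      proof (cases "w \<in> mid")
        case True
        from mid_idx[OF True] show ?thesis using True by (auto simp: merge_def pathof_def)
      next
        case False thus ?thesis by (simp add: merge_def reset_def)
      qed
    qed
    thus "(\<lambda>(\<tau>, u). merge \<tau> u) ((\<lambda>\<tau>. (reset i0 \<tau>, pathof \<tau>)) b) = b" by simp
    have off: "\<And>w. w \<notin> mid \<Longrightarrow> reset i0 b w = b w" by (simp add: reset_def)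
    have "reset i0 b \<in> T \<rightarrow>\<^sub>E UNIV"
      using b mid_T by (auto simp: reset_def PiE_def extensional_def)
    moreover have "is_labelling T i0 \<alpha> (reset i0 b)" using labelling_cong[OF off] b by simp
    moreover have "\<forall>m\<in>mid. reset i0 b m = i0" by (simp add: reset_def)
    moreover have "pathof b \<in> paths p (reset i0 b (v 0)) (reset i0 b (v p))"
      using v0m vpm by (auto simp: pathof_def paths_def reset_def)
    ultimately show "(\<lambda>\<tau>. (reset i0 \<tau>, pathof \<tau>)) b \<in> ?Sig" by simp
  qed
  also have "\<dots> = (\<Sum>\<tau>\<in>?LabZ. \<Sum>u\<in>paths p (\<tau> (v 0)) (\<tau> (v p)). ?W (merge \<tau> u))"
  proof (rule sum.Sigma[symmetric])
    have "?LabZ \<subseteq> T \<rightarrow>\<^sub>E UNIV" by blast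
    moreover have "finite (T \<rightarrow>\<^sub>E (UNIV :: 'a set))" by (rule finite_PiE[OF S.finT]) simp
    ultimately show "finite ?LabZ" by (rule finite_subset)
    show "\<forall>\<tau>\<in>?LabZ. finite (paths p (\<tau> (v 0)) (\<tau> (v p)))" by (simp add: finite_paths)
  qed
  also have "\<dots> = 0"
  proof (rule sum.neutral, rule ballI)
    fix \<tau> assume t: "\<tau> \<in> ?LabZ"
    have "(\<Sum>u\<in>paths p (\<tau> (v 0)) (\<tau> (v p)). ?W (merge \<tau> u)) =
          (\<Sum>u\<in>paths p (\<tau> (v 0)) (\<tau> (v p)). Rw Hc \<tau> * (of_nat (card (Stab PP \<tau>)) * (\<Sum>h\<in>Img PP \<tau>. Qw Hc p C u h)))"
    proof (rule sum.cong[OF refl])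
      fix u assume u: "u \<in> paths p (\<tau> (v 0)) (\<tau> (v p))"
      have off: "\<And>w. w \<notin> mid \<Longrightarrow> merge \<tau> u w = \<tau> w" by (simp add: merge_def)
      have offP: "\<And>r. r \<in> PP \<Longrightarrow> merge \<tau> u r = \<tau> r" using off mid_PP by blast
      have "Qw Hc p C (\<lambda>n. merge \<tau> u (v n)) h = Qw Hc p C u h" for h
        by (rule Qw_cong) (simp add: merge_v[OF _ u])
      thus "?W (merge \<tau> u) = Rw Hc \<tau> * (of_nat (card (Stab PP \<tau>)) * (\<Sum>h\<in>Img PP \<tau>. Qw Hc p C u h))"
      proof -
        have "Rw Hc (merge \<tau> u) = Rw Hc \<tau>" by (rule Rw_cong) (rule off)
        moreover have "Img PP (merge \<tau> u) = Img PP \<tau>" by (rule Img_cong) (rule offP)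
        moreover have "Stab PP (merge \<tau> u) = Stab PP \<tau>" by (rule Stab_cong) (rule offP)
        ultimately show ?thesis using \<open>\<And>h. Qw Hc p C (\<lambda>n. merge \<tau> u (v n)) h = Qw Hc p C u h\<close> by simp
      qed
    qed
    also have "\<dots> = Rw Hc \<tau> * (of_nat (card (Stab PP \<tau>)) * (\<Sum>h\<in>Img PP \<tau>. \<Sum>u\<in>paths p (\<tau> (v 0)) (\<tau> (v p)). Qw Hc p C u h))"
    proof -
      have "(\<Sum>u\<in>paths p (\<tau> (v 0)) (\<tau> (v p)). Rw Hc \<tau> * (of_nat (card (Stab PP \<tau>)) * (\<Sum>h\<in>Img PP \<tau>. Qw Hc p C u h))) =
            Rw Hc \<tau> * (of_nat (card (Stab PP \<tau>)) * (\<Sum>u\<in>paths p (\<tau> (v 0)) (\<tau> (v p)). \<Sum>h\<in>Img PP \<tau>. Qw Hc p C u h))"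
        by (simp only: sum_distrib_left)
      also have "(\<Sum>u\<in>paths p (\<tau> (v 0)) (\<tau> (v p)). \<Sum>h\<in>Img PP \<tau>. Qw Hc p C u h) = (\<Sum>h\<in>Img PP \<tau>. \<Sum>u\<in>paths p (\<tau> (v 0)) (\<tau> (v p)). Qw Hc p C u h)"
        by (rule sum.swap)
      finally show ?thesis .
    qed
    also have "(\<Sum>h\<in>Img PP \<tau>. \<Sum>u\<in>paths p (\<tau> (v 0)) (\<tau> (v p)). Qw Hc p C u h) = 0"
      unfolding PP_eq
    proof (rule poly_vanish[OF _ finite_C card_C _ nil])
      show "1 \<le> d" using d2 by simp
      show "\<And>i r. i < p \<Longrightarrow> r \<in> C i \<Longrightarrow> length r - length v0 - 1 = i" by (rule idx_C)
    qed
    finally show "(\<Sum>u\<in>paths p (\<tau> (v 0)) (\<tau> (v p)). ?W (merge \<tau> u)) = 0" by simp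
  qed
  finally show ?thesis .
qed

end

context pathsetup
begin

interpretation S: shuf T PP by (rule shuf)

lemma main_zero:
  fixes Hc :: "'a::finite \<Rightarrow> ('a \<Rightarrow> nat) \<Rightarrow> complex"
  assumes nil: "\<forall>x. matpow (jacobian d Hc x) p = 0"
  shows "(\<Sum>T'\<in>shuffle_class d T v0 cs. E_weight Hc i0 \<alpha> T') = 0"
proof -
  have finPP: "finite PP" using PP_T S.finT finite_subset by blast
  let ?s = "subtree_at T"
  let ?Perm = "{\<sigma>. \<sigma> permutes PP}"
  have sc: "shuffle_class d T v0 cs = S.Tsh ` ?Perm"
    unfolding shuffle_class_def Let_def by (rule S.shuffle_eq)
  have tp: "S.Tsh \<sigma> = S.Psi (restrict (?s \<circ> \<sigma>) PP)" for \<sigma>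
    unfolding S.Tsh_Psi comp_def ..
  have "S.Tsh ` ?Perm = S.Psi ` ((\<lambda>\<sigma>. restrict (?s \<circ> \<sigma>) PP) ` ?Perm)"
    unfolding image_image tp ..
  also have "(\<lambda>\<sigma>. restrict (?s \<circ> \<sigma>) PP) ` ?Perm = Img PP ?s" by (rule Img_image[OF finPP])
  finally have sc2: "shuffle_class d T v0 cs = S.Psi ` Img PP ?s" using sc by simp
  have inj: "inj_on S.Psi (Img PP ?s)"
    by (rule inj_on_subset[OF S.Psi_inj]) (auto simp: Img_def)
  have "(\<Sum>T'\<in>shuffle_class d T v0 cs. E_weight Hc i0 \<alpha> T') = (\<Sum>h\<in>Img PP ?s. E_weight Hc i0 \<alpha> (S.Psi h))"
    unfolding sc2 by (rule sum.reindex[OF inj, unfolded comp_def])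
  moreover have "(\<Sum>\<sigma>\<in>?Perm. E_weight Hc i0 \<alpha> (S.Psi (restrict (?s \<circ> \<sigma>) PP))) =
       of_nat (card (Stab PP ?s)) * (\<Sum>h\<in>Img PP ?s. E_weight Hc i0 \<alpha> (S.Psi h))"
    by (rule fiber_sum[OF finPP])
  moreover have "(\<Sum>\<sigma>\<in>?Perm. E_weight Hc i0 \<alpha> (S.Psi (restrict (?s \<circ> \<sigma>) PP))) = 0"
  proof -
    have "(\<Sum>\<sigma>\<in>?Perm. E_weight Hc i0 \<alpha> (S.Psi (restrict (?s \<circ> \<sigma>) PP))) = (\<Sum>\<sigma>\<in>?Perm. E_weight Hc i0 \<alpha> (S.Tsh \<sigma>))"
      unfolding tp ..
    also have "\<dots> = 0" unfolding sum_sigma by (rule total_zero[OF nil])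
    finally show ?thesis .
  qed
  moreover have "(of_nat (card (Stab PP ?s)) :: complex) \<noteq> 0" using Stab_nonempty[OF finPP, of ?s] by simp
  ultimately show ?thesis by simp
qed

end

theorem lemma3p3:
  fixes Hc :: "'n::finite \<Rightarrow> ('n \<Rightarrow> nat) \<Rightarrow> complex"
    and d p :: nat
  assumes "d \<ge> 2"
    and "1 \<le> p" and "p \<le> CARD('n)"
    and "\<forall>x. matpow (jacobian d Hc x) p = 0"
  shows "\<forall>k \<ge> 1. \<forall>(i::'n) (\<alpha>::'n \<Rightarrow> nat) S.
           sum \<alpha> UNIV = (d - 1) * k + 1 \<longrightarrow> is_shuffle_class d k p S \<longrightarrow>
           (\<Sum>T\<in>S. E_weight Hc i \<alpha> T) = 0"
proof (intro allI impI)
  fix k i \<alpha> S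
  assume "is_shuffle_class d k p S"
  then obtain T v0 cs where T: "T \<in> catalan_set d k" "length cs = p" "v0 @ cs \<in> T" "S = shuffle_class d T v0 cs"
    unfolding is_shuffle_class_def by blast
  interpret pathsetup d T v0 cs p
    using T assms(1) by unfold_locales (auto simp: catalan_set_def)
  show "(\<Sum>T\<in>S. E_weight Hc i \<alpha> T) = 0" unfolding T(4) by (rule main_zero[OF assms(4)])
qed

end
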